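(* Assume the filtration is regular with constant $R$, let $r=\frac1{2(R+3)}$ and let $T=T(\sigma)$ be a martingale transform. For every bounded $f$ there exists a sparse sequence of stopping times $\{\nu_j\}_{j\ge0}$ such that $$T^*f\lesssim\sum_{j=0}^\infty\mathsf{P}^r_{\nu_j}(\mathcal{M}_{(\nu_j)}f)\,\mathbf{1}_{\{\nu_j<\infty\}},$$ with implicit constant independent of $f$.
   Context: $(\Omega,\mathcal{F},\mu)$ is a probability space with filtration $\{\mathcal{F}_k\}_{k\ge0}$ generating $\mathcal{F}$, $\mathsf{E}_k=\mathsf{E}[\cdot|\mathcal{F}_k]$, $df_k=\mathsf{E}_kf-\mathsf{E}_{k-1}f$ ($k\ge1$), $df_0=\mathsf{E}_0f$. Regular with constant $R$: $\mathsf{E}_kf\le R\,\mathsf{E}_{k-1}f$ a.e. for nonnegative integrable $f$. $\sigma=\{\sigma_k\}$ with $\sigma_k$ $\mathcal{F}_{k-1}$-measurable ($\mathcal{F}_{-1}:=\mathcal{F}_0$), $\sup_k\|\sigma_k\|_\infty\le1$; $T^*f=\sup_{\ell\ge0}|\sum_{0\le k\le\ell}\sigma_kdf_k|$. $\mathsf{P}^r_kg(x):=\inf\{t\in\mathbb{Q}:\mathsf{E}_k[\mathbf{1}_{\{g>t\}}](x)\le r\}$, $\mathsf{P}^r_\nu g=\sum_k\mathbf{1}_{\{\nu=k\}}\mathsf{P}^r_kg$, $\mathcal{M}_{(\nu)}f(x)=\sup_{k\ge\nu(x)}|\mathsf{E}_kf(x)|$. An increasing sequence of stopping times $\{\nu_k\}$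 is sparse if with $E_k=\{\nu_k<\infty\}$, for every $k$ and $A\subseteq E_k$ with $A\in\mathcal{F}_{\nu_k}$, $\mu(A\cap E_{k+1})\le\frac12\mu(A)$. *)

theory Defs
  imports "HOL-Probability.Probability"
begin

definition condE :: "'a measure \<Rightarrow> (nat \<Rightarrow> 'a measure) \<Rightarrow> nat \<Rightarrow> ('a \<Rightarrow> real) \<Rightarrow> 'a \<Rightarrow> real" where
  "condE M F k f = real_cond_exp M (F k) f"

definition is_filtration :: "'a measure \<Rightarrow> (nat \<Rightarrow> 'a measure) \<Rightarrow> bool" where
  "is_filtration M F \<longleftrightarrow> (\<forall>k. subalgebra M (F k)) \<and> (\<forall>k. sets (F k) \<subseteq> sets (F (Suc k)))
     \<and> sets M = sigma_sets (space M) (\<Union>k. sets (F k))"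

definition regular_filtration :: "'a measure \<Rightarrow> (nat \<Rightarrow> 'a measure) \<Rightarrow> real \<Rightarrow> bool" where
  "regular_filtration M F R \<longleftrightarrow>
     (\<forall>f k. integrable M f \<longrightarrow> (\<forall>x\<in>space M. 0 \<le> f x) \<longrightarrow> 1 \<le> k \<longrightarrow>
        (AE x in M. condE M F k f x \<le> R * condE M F (k - 1) f x))"

definition mdiff :: "'a measure \<Rightarrow> (nat \<Rightarrow> 'a measure) \<Rightarrow> ('a \<Rightarrow> real) \<Rightarrow> nat \<Rightarrow> 'a \<Rightarrow> real" where
  "mdiff M F f k x = (if k = 0 then condE M F 0 f x else condE M F k f x - condE M F (k - 1) f x)"

text \<open>Predictable sequence sigma (sigma_k is F_{k-1}-measurable, F_{-1} = F_0) with sup norms \<le> 1.\<close>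
definition predictable_bounded :: "'a measure \<Rightarrow> (nat \<Rightarrow> 'a measure) \<Rightarrow> (nat \<Rightarrow> 'a \<Rightarrow> real) \<Rightarrow> bool" where
  "predictable_bounded M F \<sigma> \<longleftrightarrow>
     (\<forall>k. \<sigma> k \<in> borel_measurable (F (k - 1)) \<and> (AE x in M. \<bar>\<sigma> k x\<bar> \<le> 1))"

definition Tstar :: "'a measure \<Rightarrow> (nat \<Rightarrow> 'a measure) \<Rightarrow> (nat \<Rightarrow> 'a \<Rightarrow> real) \<Rightarrow> ('a \<Rightarrow> real) \<Rightarrow> 'a \<Rightarrow> ennreal" where
  "Tstar M F \<sigma> f x = (SUP l. ennreal \<bar>\<Sum>k\<le>l. \<sigma> k x * mdiff M F f k x\<bar>)"

definition Pr :: "'a measure \<Rightarrow> (nat \<Rightarrow> 'a measure) \<Rightarrow> real \<Rightarrow> nat \<Rightarrow> ('a \<Rightarrow> ereal) \<Rightarrow> 'a \<Rightarrow> ereal" where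
  "Pr M F r k g x = Inf {ereal t | t. t \<in> \<rat> \<and>
      condE M F k (indicator {y \<in> space M. ereal t < g y}) x \<le> r}"

definition Pr_stop :: "'a measure \<Rightarrow> (nat \<Rightarrow> 'a measure) \<Rightarrow> real \<Rightarrow> ('a \<Rightarrow> enat) \<Rightarrow> ('a \<Rightarrow> ereal) \<Rightarrow> 'a \<Rightarrow> ereal" where
  "Pr_stop M F r \<nu> g x = (case \<nu> x of enat k \<Rightarrow> Pr M F r k g x | \<infinity> \<Rightarrow> 0)"

definition maxop_stop :: "'a measure \<Rightarrow> (nat \<Rightarrow> 'a measure) \<Rightarrow> ('a \<Rightarrow> enat) \<Rightarrow> ('a \<Rightarrow> real) \<Rightarrow> 'a \<Rightarrow> ereal" where
  "maxop_stop M F \<nu> f x = (SUP k \<in> {k. \<nu> x \<le> enat k}. ereal \<bar>condE M F k f x\<bar>)"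

definition stopping_time_F :: "'a measure \<Rightarrow> (nat \<Rightarrow> 'a measure) \<Rightarrow> ('a \<Rightarrow> enat) \<Rightarrow> bool" where
  "stopping_time_F M F \<nu> \<longleftrightarrow> (\<forall>k. {x \<in> space M. \<nu> x \<le> enat k} \<in> sets (F k))"

definition stopped_sets :: "'a measure \<Rightarrow> (nat \<Rightarrow> 'a measure) \<Rightarrow> ('a \<Rightarrow> enat) \<Rightarrow> 'a set set" where
  "stopped_sets M F \<nu> = {A \<in> sets M. \<forall>k. A \<inter> {x \<in> space M. \<nu> x \<le> enat k} \<in> sets (F k)}"

definition sparse_stopping :: "'a measure \<Rightarrow> (nat \<Rightarrow> 'a measure) \<Rightarrow> (nat \<Rightarrow> 'a \<Rightarrow> enat) \<Rightarrow> bool" where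
  "sparse_stopping M F \<nu> \<longleftrightarrow>
     (\<forall>j. stopping_time_F M F (\<nu> j)) \<and>
     (\<forall>j. \<forall>x\<in>space M. \<nu> j x \<le> \<nu> (Suc j) x) \<and>
     (\<forall>j A. A \<in> stopped_sets M F (\<nu> j) \<longrightarrow> A \<subseteq> {x \<in> space M. \<nu> j x < \<infinity>} \<longrightarrow>
        measure M (A \<inter> {x \<in> space M. \<nu> (Suc j) x < \<infinity>}) \<le> measure M A / 2)"

end

theory Submission
  imports Defs
begin


locale filt_setting =
  fixes M :: "'a measure" and F :: "nat \<Rightarrow> 'a measure"
  assumes prob: "prob_space M"
    and filt: "is_filtration M F"
begin

sublocale prob_space M by (rule prob)

lemma subalg: "subalgebra M (F k)"
  using filt unfolding is_filtration_def by auto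

lemma space_F[simp]: "space (F k) = space M"
  using subalg unfolding subalgebra_def by auto

lemma sets_F_M: "A \<in> sets (F k) \<Longrightarrow> A \<in> sets M"
  using subalg unfolding subalgebra_def by auto

lemma sets_F_mono: "i \<le> k \<Longrightarrow> sets (F i) \<subseteq> sets (F k)"
proof (induction k)
  case 0 then show ?case by simp
next
  case (Suc k)
  have "sets (F k) \<subseteq> sets (F (Suc k))" using filt unfolding is_filtration_def by auto
  with Suc show ?case by (cases "i = Suc k") auto
qed

lemma sets_F_up: "A \<in> sets (F i) \<Longrightarrow> i \<le> k \<Longrightarrow> A \<in> sets (F k)"
  using sets_F_mono by blast

lemma meas_up: "h \<in> borel_measurable (F i) \<Longrightarrow> i \<le> k \<Longrightarrow> h \<in> borel_measurable (F k)"
  unfolding measurable_def using sets_F_mono by auto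

lemma meas_FM: "h \<in> borel_measurable (F k) \<Longrightarrow> h \<in> borel_measurable M"
  by (rule measurable_from_subalg[OF subalg])

lemma sfs: "sigma_finite_subalgebra M (F k)"
proof -
  interpret finite_measure_subalgebra M "F k"
    by unfold_locales (rule subalg)
  show ?thesis by (rule sigma_finite_subalgebra_axioms)
qed

lemma condE_meas[measurable]: "condE M F k h \<in> borel_measurable (F k)"
  unfolding condE_def by simp

lemma condE_measM[measurable]: "condE M F k h \<in> borel_measurable M"
  unfolding condE_def by simp

lemma condE_int: "integrable M h \<Longrightarrow> integrable M (condE M F k h)"
  unfolding condE_def using sigma_finite_subalgebra.real_cond_exp_int[OF sfs] by blast

lemma condE_intg:
  assumes "integrable M (\<lambda>x. g x * h x)" "g \<in> borel_measurable (F k)" "h \<in> borel_measurable M"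
  shows "(\<integral>x. g x * condE M F k h x \<partial>M) = (\<integral>x. g x * h x \<partial>M)"
  unfolding condE_def using sigma_finite_subalgebra.real_cond_exp_intg(2)[OF sfs assms] .

lemma condE_self:
  assumes "integrable M h" "h \<in> borel_measurable (F k)"
  shows "AE x in M. condE M F k h x = h x"
  unfolding condE_def using sigma_finite_subalgebra.real_cond_exp_F_meas[OF sfs assms] .

lemma condE_mono:
  assumes "AE x in M. g x \<le> h x" "integrable M g" "integrable M h"
  shows "AE x in M. condE M F k g x \<le> condE M F k h x"
  unfolding condE_def using sigma_finite_subalgebra.real_cond_exp_mono[OF sfs assms] .

lemma condE_le_c:
  assumes "integrable M h" "AE x in M. h x \<le> c"
  shows "AE x in M. condE M F k h x \<le> c"
  unfolding condE_def using sigma_finite_subalgebra.real_cond_exp_le_c[OF sfs assms] .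

lemma condE_ge_c:
  assumes "integrable M h" "AE x in M. c \<le> h x"
  shows "AE x in M. c \<le> condE M F k h x"
  unfolding condE_def using sigma_finite_subalgebra.real_cond_exp_ge_c[OF sfs assms] .

lemma condE_abs_le:
  assumes "integrable M h" "\<forall>x\<in>space M. \<bar>h x\<bar> \<le> c"
  shows "AE x in M. \<bar>condE M F k h x\<bar> \<le> c"
proof -
  have "AE x in M. condE M F k h x \<le> c"
    by (rule condE_le_c[OF assms(1)]) (use assms(2) in \<open>auto simp: abs_le_iff\<close>)
  moreover have "AE x in M. -c \<le> condE M F k h x"
    by (rule condE_ge_c[OF assms(1)]) (use assms(2) in \<open>force simp: abs_le_iff\<close>)
  ultimately show ?thesis by eventually_elim auto
qed

lemma integrable_ind[simp]: "A \<in> sets M \<Longrightarrow> integrable M (indicator A :: 'a \<Rightarrow> real)"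
  by (rule integrable_const_bound[where B=1]) (auto split: split_indicator)

lemma integrable_bdd:
  fixes h :: "'a \<Rightarrow> real"
  assumes "h \<in> borel_measurable M" "AE x in M. \<bar>h x\<bar> \<le> B"
  shows "integrable M h"
  by (rule integrable_const_bound[where B=B]) (use assms in auto)

lemma condE_ind_bounds:
  assumes "A \<in> sets M"
  shows "AE x in M. 0 \<le> condE M F k (indicator A) x \<and> condE M F k (indicator A) x \<le> 1"
proof -
  have "AE x in M. condE M F k (indicator A) x \<le> 1"
    by (rule condE_le_c) (use assms in \<open>auto split: split_indicator\<close>)
  moreover have "AE x in M. 0 \<le> condE M F k (indicator A) x"
    by (rule condE_ge_c) (use assms in \<open>auto split: split_indicator\<close>)
  ultimately show ?thesis by eventually_elim auto
qed

end



context filt_setting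
begin

definition bdd :: "('a \<Rightarrow> real) \<Rightarrow> bool" where
  "bdd h \<longleftrightarrow> h \<in> borel_measurable M \<and> (\<exists>B. AE x in M. \<bar>h x\<bar> \<le> B)"

lemma bddI: "h \<in> borel_measurable M \<Longrightarrow> AE x in M. \<bar>h x\<bar> \<le> B \<Longrightarrow> bdd h"
  unfolding bdd_def by blast

lemma bdd_int: "bdd h \<Longrightarrow> integrable M h"
  unfolding bdd_def using integrable_bdd by blast

lemma bdd_meas: "bdd h \<Longrightarrow> h \<in> borel_measurable M"
  unfolding bdd_def by blast

lemma bdd_const[simp]: "bdd (\<lambda>x. c)"
  by (rule bddI[where B="\<bar>c\<bar>"]) auto

lemma bdd_ind[simp]: "A \<in> sets M \<Longrightarrow> bdd (indicator A)"
  by (rule bddI[where B=1]) (auto split: split_indicator)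

lemma bdd_mult: "bdd g \<Longrightarrow> bdd h \<Longrightarrow> bdd (\<lambda>x. g x * h x)"
proof -
  assume "bdd g" "bdd h"
  then obtain B1 B2 where m: "g \<in> borel_measurable M" "h \<in> borel_measurable M"
    and b: "AE x in M. \<bar>g x\<bar> \<le> B1" "AE x in M. \<bar>h x\<bar> \<le> B2" unfolding bdd_def by blast
  have "AE x in M. \<bar>g x * h x\<bar> \<le> B1 * B2"
    using b(1) b(2) by eventually_elim (auto simp: abs_mult intro!: mult_mono)
  with m show ?thesis by (intro bddI) auto
qed

lemma bdd_add: "bdd g \<Longrightarrow> bdd h \<Longrightarrow> bdd (\<lambda>x. g x + h x)"
proof -
  assume "bdd g" "bdd h"
  then obtain B1 B2 where m: "g \<in> borel_measurable M" "h \<in> borel_measurable M"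
    and b: "AE x in M. \<bar>g x\<bar> \<le> B1" "AE x in M. \<bar>h x\<bar> \<le> B2" unfolding bdd_def by blast
  have "AE x in M. \<bar>g x + h x\<bar> \<le> B1 + B2"
    using b(1) b(2) by eventually_elim auto
  with m show ?thesis by (intro bddI) auto
qed

lemma bdd_minus: "bdd h \<Longrightarrow> bdd (\<lambda>x. - h x)"
  unfolding bdd_def by auto

lemma bdd_diff: "bdd g \<Longrightarrow> bdd h \<Longrightarrow> bdd (\<lambda>x. g x - h x)"
  using bdd_add[of g "\<lambda>x. - h x"] bdd_minus[of h] by simp

lemma bdd_sum: "finite I \<Longrightarrow> (\<And>i. i \<in> I \<Longrightarrow> bdd (g i)) \<Longrightarrow> bdd (\<lambda>x. \<Sum>i\<in>I. g i x)"
proof (induction I rule: finite_induct)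
  case empty then show ?case by simp
next
  case (insert i I)
  then show ?case by (simp add: bdd_add)
qed

lemma bdd_pow2: "bdd h \<Longrightarrow> bdd (\<lambda>x. (h x)\<^sup>2)"
  using bdd_mult[of h h] by (simp add: power2_eq_square)

lemma bdd_condE: "bdd h \<Longrightarrow> bdd (condE M F k h)"
proof -
  assume "bdd h"
  then obtain B where m: "h \<in> borel_measurable M" and b: "AE x in M. \<bar>h x\<bar> \<le> B" unfolding bdd_def by blast
  have i: "integrable M h" using \<open>bdd h\<close> bdd_int by blast
  have "AE x in M. condE M F k h x \<le> B"
    by (rule condE_le_c[OF i]) (use b in \<open>auto simp: abs_le_iff\<close>)
  moreover have "AE x in M. -B \<le> condE M F k h x"
    by (rule condE_ge_c[OF i]) (use b in \<open>force simp: abs_le_iff\<close>)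
  ultimately have "AE x in M. \<bar>condE M F k h x\<bar> \<le> B" by eventually_elim auto
  then show ?thesis by (intro bddI) auto
qed

end

locale mart_setting = filt_setting M F
  for M :: "'a measure" and F :: "nat \<Rightarrow> 'a measure" +
  fixes R :: real and \<sigma> :: "nat \<Rightarrow> 'a \<Rightarrow> real" and f :: "'a \<Rightarrow> real" and Bd :: real
  assumes reg: "regular_filtration M F R"
    and predb: "predictable_bounded M F \<sigma>"
    and f_meas[measurable]: "f \<in> borel_measurable M"
    and f_bd: "\<forall>x\<in>space M. \<bar>f x\<bar> \<le> Bd"
begin

abbreviation fk :: "nat \<Rightarrow> 'a \<Rightarrow> real" where "fk k \<equiv> condE M F k f"

definition dd :: "nat \<Rightarrow> 'a \<Rightarrow> real" where "dd k = mdiff M F f k"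

definition S :: "nat \<Rightarrow> 'a \<Rightarrow> real" where "S l x = (\<Sum>k\<le>l. \<sigma> k x * dd k x)"

lemma f_bdd: "bdd f"
  by (rule bddI[where B=Bd]) (use f_bd in auto)

lemma f_int: "integrable M f" using f_bdd bdd_int by blast

lemma fk_bdd: "bdd (fk k)" using bdd_condE[OF f_bdd] .

lemma fk_AE: "AE x in M. \<forall>k. \<bar>fk k x\<bar> \<le> Bd"
  unfolding AE_all_countable using condE_abs_le[OF f_int f_bd] by blast

lemma dd_Suc: "dd (Suc k) x = fk (Suc k) x - fk k x"
  unfolding dd_def mdiff_def by simp

lemma dd_pos: "0 < k \<Longrightarrow> dd k x = fk k x - fk (k - 1) x"
  unfolding dd_def mdiff_def by simp

lemma dd_0: "dd 0 x = fk 0 x"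
  unfolding dd_def mdiff_def by simp

lemma dd_meas[measurable]: "dd k \<in> borel_measurable (F k)"
proof (cases k)
  case 0 then show ?thesis unfolding dd_def mdiff_def by simp
next
  case (Suc j)
  have "fk j \<in> borel_measurable (F k)" using meas_up[OF condE_meas[of j f]] Suc by simp
  then show ?thesis unfolding dd_def mdiff_def using Suc by simp
qed

lemma dd_bdd: "bdd (dd k)"
proof (cases k)
  case 0 then show ?thesis using fk_bdd by (simp add: dd_0[abs_def])
next
  case (Suc j) then show ?thesis using fk_bdd by (simp add: dd_Suc[abs_def] bdd_diff)
qed

lemma sigma_meas: "\<sigma> k \<in> borel_measurable (F (k - 1))"
  using predb unfolding predictable_bounded_def by auto

lemma sigma_meas_up: "k \<le> l \<Longrightarrow> \<sigma> k \<in> borel_measurable (F l)"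
  using meas_up[OF sigma_meas] by simp

lemma sigma_AE: "AE x in M. \<forall>k. \<bar>\<sigma> k x\<bar> \<le> 1"
  unfolding AE_all_countable using predb unfolding predictable_bounded_def by auto

lemma sigma_bdd: "bdd (\<sigma> k)"
  apply (rule bddI[where B=1])
  using meas_FM[OF sigma_meas] apply simp
  using predb unfolding predictable_bounded_def by auto

lemma S_meas: "S l \<in> borel_measurable (F l)"
proof -
  have "(\<lambda>x. \<Sum>k\<le>l. \<sigma> k x * dd k x) \<in> borel_measurable (F l)"
  proof (intro borel_measurable_sum borel_measurable_times)
    fix k assume "k \<in> {..l}"
    then show "\<sigma> k \<in> borel_measurable (F l)" "dd k \<in> borel_measurable (F l)"
      using sigma_meas_up meas_up[OF dd_meas] by auto
  qed
  then show ?thesis unfolding S_def[abs_def] .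
qed

lemma R_ge1: "1 \<le> R"
proof -
  have c: "AE x in M. condE M F k (\<lambda>_. 1) x = 1" for k
    by (rule condE_self) auto
  have "AE x in M. condE M F 1 (\<lambda>_. 1) x \<le> R * condE M F (1 - 1) (\<lambda>_. 1) x"
    using reg unfolding regular_filtration_def by (metis integrable_const order_refl zero_le_one)
  with c[of 1] c[of 0] have "AE x in M. 1 \<le> R" by eventually_elim auto
  then show ?thesis by simp
qed

lemma orth:
  assumes W: "W \<in> borel_measurable (F n)" "bdd W"
  shows "(\<integral>x. W x * dd (Suc n) x \<partial>M) = 0"
proof -
  have WS: "W \<in> borel_measurable (F (Suc n))" using meas_up[OF W(1)] by simp
  have i1: "integrable M (\<lambda>x. W x * f x)" using bdd_int bdd_mult W(2) f_bdd by blast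
  have i2: "integrable M (\<lambda>x. W x * fk k x)" for k using bdd_int bdd_mult W(2) fk_bdd by blast
  have e1: "(\<integral>x. W x * fk (Suc n) x \<partial>M) = (\<integral>x. W x * f x \<partial>M)"
    by (rule condE_intg[OF i1 WS f_meas])
  have e2: "(\<integral>x. W x * fk n x \<partial>M) = (\<integral>x. W x * f x \<partial>M)"
    by (rule condE_intg[OF i1 W(1) f_meas])
  have "(\<integral>x. W x * dd (Suc n) x \<partial>M) = (\<integral>x. W x * fk (Suc n) x - W x * fk n x \<partial>M)"
    by (simp add: dd_Suc right_diff_distrib)
  also have "\<dots> = (\<integral>x. W x * fk (Suc n) x \<partial>M) - (\<integral>x. W x * fk n x \<partial>M)"
    by (rule Bochner_Integration.integral_diff[OF i2 i2])
  finally show ?thesis using e1 e2 by simp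
qed

lemma pyth:
  assumes bm: "\<And>i. b i \<in> borel_measurable (F (i - 1))" and bb: "\<And>i. bdd (b i)"
  shows "(\<integral>x. (\<Sum>i\<in>{k0<..n}. b i x * dd i x)\<^sup>2 \<partial>M) = (\<Sum>i\<in>{k0<..n}. \<integral>x. (b i x)\<^sup>2 * (dd i x)\<^sup>2 \<partial>M)"
proof (induction n)
  case 0 then show ?case by simp
next
  case (Suc n)
  show ?case
  proof (cases "k0 < Suc n")
    case False
    then have "{k0<..Suc n} = {}" by auto
    then show ?thesis by simp
  next
    case True
    have ins: "{k0<..Suc n} = insert (Suc n) {k0<..n}" using True by auto
    define T where "T x = (\<Sum>i\<in>{k0<..n}. b i x * dd i x)" for x
    have Tb: "bdd T" unfolding T_def[abs_def]
      by (intro bdd_sum bdd_mult bb dd_bdd) auto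
    have Tm: "T \<in> borel_measurable (F n)" unfolding T_def[abs_def]
    proof (intro borel_measurable_sum borel_measurable_times)
      fix i assume "i \<in> {k0<..n}"
      then show "b i \<in> borel_measurable (F n)" "dd i \<in> borel_measurable (F n)"
        using meas_up[OF bm[of i]] meas_up[OF dd_meas[of i]] by auto
    qed
    have bSm: "b (Suc n) \<in> borel_measurable (F n)" using bm[of "Suc n"] by simp
    have cross: "(\<integral>x. (T x * b (Suc n) x) * dd (Suc n) x \<partial>M) = 0"
      by (rule orth) (use Tm bSm bdd_mult[OF Tb bb] in auto)
    have sq: "(\<Sum>i\<in>{k0<..Suc n}. b i x * dd i x)\<^sup>2
        = (T x)\<^sup>2 + 2 * ((T x * b (Suc n) x) * dd (Suc n) x) + (b (Suc n) x)\<^sup>2 * (dd (Suc n) x)\<^sup>2" for x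
      unfolding ins T_def by (simp add: power2_eq_square algebra_simps)
    have iT: "integrable M (\<lambda>x. (T x)\<^sup>2)" using bdd_int bdd_pow2 Tb by blast
    have iC: "integrable M (\<lambda>x. 2 * ((T x * b (Suc n) x) * dd (Suc n) x))"
      using bdd_int bdd_mult[OF bdd_const bdd_mult[OF bdd_mult[OF Tb bb] dd_bdd]] by blast
    have iL: "integrable M (\<lambda>x. (b (Suc n) x)\<^sup>2 * (dd (Suc n) x)\<^sup>2)"
      using bdd_int bdd_mult[OF bdd_pow2[OF bb] bdd_pow2[OF dd_bdd]] by blast
    have "(\<integral>x. (\<Sum>i\<in>{k0<..Suc n}. b i x * dd i x)\<^sup>2 \<partial>M)
        = (\<integral>x. (T x)\<^sup>2 \<partial>M) + (\<integral>x. 2 * ((T x * b (Suc n) x) * dd (Suc n) x) \<partial>M)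
          + (\<integral>x. (b (Suc n) x)\<^sup>2 * (dd (Suc n) x)\<^sup>2 \<partial>M)"
      unfolding sq using iT iC iL by simp
    also have "(\<integral>x. 2 * ((T x * b (Suc n) x) * dd (Suc n) x) \<partial>M) = 0"
      using cross by simp
    finally show ?thesis unfolding ins using Suc.IH unfolding T_def by simp
  qed
qed

end



context mart_setting
begin

definition rr :: real where "rr = 1 / (2 * (R + 3))"
definition th :: real where "th = 1 / (R + 1)"
definition KK :: real where "KK = 2 * (R + 3)"

lemma cfacts: "0 < rr" "rr \<le> th" "th * R < 1" "0 < th" "0 < KK" "rr < 1"
  "rr / th + 4 / KK\<^sup>2 \<le> 1 / 2"
proof -
  have R: "1 \<le> R" by (rule R_ge1)
  show "0 < rr" "0 < th" "0 < KK" using R by (auto simp: rr_def th_def KK_def)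
  show "rr \<le> th" using R by (auto simp: rr_def th_def field_simps)
  show "th * R < 1" using R by (auto simp: th_def field_simps)
  show "rr < 1" using R by (auto simp: rr_def field_simps)
  have "rr / th = (R + 1) / (2 * (R + 3))" using R by (simp add: rr_def th_def field_simps)
  moreover have "4 / KK\<^sup>2 = 1 / (R + 3)^2" using R by (simp add: KK_def power2_eq_square divide_simps) (simp add: algebra_simps)
  moreover have "1 / (R + 3)^2 \<le> 1 / (R + 3)"
  proof (rule divide_left_mono)
    have "(R + 3) * 1 \<le> (R + 3) * (R + 3)" using R by (intro mult_left_mono) auto
    then show "R + 3 \<le> (R + 3)\<^sup>2" by (simp add: power2_eq_square)
    show "0 < (R + 3)\<^sup>2 * (R + 3)" using R by simp
  qed simp
  moreover have "(R + 1) / (2 * (R + 3)) + 1 / (R + 3) = 1 / 2"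
  proof -
    have n: "R + 3 \<noteq> 0" using R by simp
    have "1 / (R + 3) = 2 / (2 * (R + 3))" by (metis mult_divide_mult_cancel_left_if mult_1_right zero_neq_numeral)
    then have "(R + 1) / (2 * (R + 3)) + 1 / (R + 3) = (R + 3) / (2 * (R + 3))"
      by (simp add: add_divide_distrib[symmetric])
    also have "\<dots> = 1 / 2" using n by simp
    finally show ?thesis .
  qed
  ultimately show "rr / th + 4 / KK\<^sup>2 \<le> 1 / 2" by linarith
qed

definition gg :: "('a \<Rightarrow> enat) \<Rightarrow> 'a \<Rightarrow> ereal" where "gg \<nu> = maxop_stop M F \<nu> f"
definition Gs :: "('a \<Rightarrow> enat) \<Rightarrow> real \<Rightarrow> 'a set" where "Gs \<nu> t = {y \<in> space M. ereal t < gg \<nu> y}"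
definition Pm :: "('a \<Rightarrow> enat) \<Rightarrow> nat \<Rightarrow> int \<Rightarrow> 'a \<Rightarrow> bool" where
  "Pm \<nu> k m x \<longleftrightarrow> condE M F k (indicator (Gs \<nu> (2 powr real_of_int m))) x \<le> rr"
definition Qs :: "('a \<Rightarrow> enat) \<Rightarrow> nat \<Rightarrow> 'a \<Rightarrow> int set" where
  "Qs \<nu> k x = {m. \<forall>m'\<ge>m. Pm \<nu> k m' x}"
definition mua :: "('a \<Rightarrow> enat) \<Rightarrow> nat \<Rightarrow> 'a \<Rightarrow> ereal" where
  "mua \<nu> k x = (INF m\<in>Qs \<nu> k x. ereal (2 powr real_of_int m))"
definition mu :: "('a \<Rightarrow> enat) \<Rightarrow> 'a \<Rightarrow> ereal" where
  "mu \<nu> x = (case \<nu> x of enat k \<Rightarrow> mua \<nu> k x | \<infinity> \<Rightarrow> \<infinity>)"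
definition Bs :: "('a \<Rightarrow> enat) \<Rightarrow> 'a set" where "Bs \<nu> = {y \<in> space M. mu \<nu> y < gg \<nu> y}"
definition stc :: "('a \<Rightarrow> enat) \<Rightarrow> nat \<Rightarrow> nat \<Rightarrow> 'a \<Rightarrow> bool" where
  "stc \<nu> k0 k x \<longleftrightarrow> th < condE M F k (indicator (Bs \<nu>)) x \<or> ereal KK * mu \<nu> x < ereal \<bar>S k x - S k0 x\<bar>"
definition stc' :: "('a \<Rightarrow> enat) \<Rightarrow> nat \<Rightarrow> nat \<Rightarrow> 'a \<Rightarrow> bool" where
  "stc' \<nu> k0 k x \<longleftrightarrow> th < condE M F k (indicator (Bs \<nu>)) x \<or> ereal KK * mua \<nu> k0 x < ereal \<bar>S k x - S k0 x\<bar>"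
definition nxt :: "('a \<Rightarrow> enat) \<Rightarrow> 'a \<Rightarrow> enat" where
  "nxt \<nu> x = (case \<nu> x of \<infinity> \<Rightarrow> \<infinity> | enat k0 \<Rightarrow>
      (if \<exists>k>k0. stc \<nu> k0 k x then enat (LEAST k. k0 < k \<and> stc \<nu> k0 k x) else \<infinity>))"

lemma mu_enat: "\<nu> x = enat k \<Longrightarrow> mu \<nu> x = mua \<nu> k x"
  unfolding mu_def by simp

lemma stc_stc': "\<nu> x = enat k0 \<Longrightarrow> stc \<nu> k0 k x \<longleftrightarrow> stc' \<nu> k0 k x"
  unfolding stc_def stc'_def by (simp add: mu_enat)

lemma st_eq:
  assumes "stopping_time_F M F \<nu>"
  shows "{x \<in> space M. \<nu> x = enat k} \<in> sets (F k)"
proof (cases k)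
  case 0
  have "{x \<in> space M. \<nu> x = enat k} = {x \<in> space M. \<nu> x \<le> enat 0}" using 0 by (auto simp: enat_0)
  then show ?thesis using assms 0 unfolding stopping_time_F_def by metis
next
  case (Suc j)
  have eq: "{x \<in> space M. \<nu> x = enat k} = {x \<in> space M. \<nu> x \<le> enat k} - {x \<in> space M. \<nu> x \<le> enat j}"
  proof (intro set_eqI iffI)
    fix x assume "x \<in> {x \<in> space M. \<nu> x = enat k}"
    then show "x \<in> {x \<in> space M. \<nu> x \<le> enat k} - {x \<in> space M. \<nu> x \<le> enat j}" using Suc by auto
  next
    fix x assume a: "x \<in> {x \<in> space M. \<nu> x \<le> enat k} - {x \<in> space M. \<nu> x \<le> enat j}"
    then obtain n where n: "\<nu> x = enat n" by (cases "\<nu> x") auto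
    with a Suc show "x \<in> {x \<in> space M. \<nu> x = enat k}" by auto
  qed
  have h1: "{x \<in> space M. \<nu> x \<le> enat j} \<in> sets (F k)"
  proof -
    have "{x \<in> space M. \<nu> x \<le> enat j} \<in> sets (F j)" using assms unfolding stopping_time_F_def by blast
    then show ?thesis by (rule sets_F_up) (use Suc in simp)
  qed
  have h2: "{x \<in> space M. \<nu> x \<le> enat k} \<in> sets (F k)"
    using assms unfolding stopping_time_F_def by blast
  show ?thesis unfolding eq by (rule sets.Diff[OF h2 h1])
qed

lemma st_meas:
  assumes "stopping_time_F M F \<nu>"
  shows "\<nu> \<in> measurable M (count_space UNIV)"
proof -
  have fin: "{x \<in> space M. \<nu> x = enat k} \<in> sets M" for k using st_eq[OF assms] sets_F_M by blast
  have inf: "{x \<in> space M. \<nu> x = \<infinity>} = space M - (\<Union>k. {x \<in> space M. \<nu> x = enat k})" by auto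
  have "{x \<in> space M. \<nu> x = \<infinity>} \<in> sets M" unfolding inf using fin by auto
  then show ?thesis
    unfolding measurable_count_space_eq2_countable using fin
  proof (intro conjI ballI)
    fix e :: enat
    show "\<nu> -` {e} \<inter> space M \<in> sets M"
    proof (cases e)
      case (enat k)
      have "\<nu> -` {e} \<inter> space M = {x \<in> space M. \<nu> x = enat k}" using enat by auto
      then show ?thesis using fin by simp
    next
      case infinity
      have "\<nu> -` {e} \<inter> space M = {x \<in> space M. \<nu> x = \<infinity>}" using infinity by auto
      then show ?thesis using \<open>{x \<in> space M. \<nu> x = \<infinity>} \<in> sets M\<close> by simp
    qed
  qed auto
qed

end



context mart_setting
begin

lemma SUP_set_bot:
  fixes h :: "nat \<Rightarrow> ereal"
  shows "(SUP k\<in>{k. P k}. h k) = (SUP k. if P k then h k else -\<infinity>)"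
proof (rule antisym)
  show "(SUP k\<in>{k. P k}. h k) \<le> (SUP k. if P k then h k else -\<infinity>)"
  proof (rule SUP_least)
    fix k assume "k \<in> {k. P k}"
    then show "h k \<le> (SUP k. if P k then h k else -\<infinity>)" by (intro SUP_upper2[of k]) auto
  qed
  show "(SUP k. if P k then h k else -\<infinity>) \<le> (SUP k\<in>{k. P k}. h k)"
    by (rule SUP_least) (auto intro: SUP_upper)
qed

lemma INF_set_top:
  fixes h :: "int \<Rightarrow> ereal"
  shows "(INF k\<in>{k. P k}. h k) = (INF k. if P k then h k else \<infinity>)"
proof (rule antisym)
  show "(INF k. if P k then h k else \<infinity>) \<le> (INF k\<in>{k. P k}. h k)"
  proof (rule INF_greatest)
    fix k assume "k \<in> {k. P k}"
    then show "(INF k. if P k then h k else \<infinity>) \<le> h k" by (intro INF_lower2[of k]) auto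
  qed
  show "(INF k\<in>{k. P k}. h k) \<le> (INF k. if P k then h k else \<infinity>)"
    by (rule INF_greatest) (auto intro: INF_lower)
qed

lemma gg_meas:
  assumes st: "stopping_time_F M F \<nu>"
  shows "gg \<nu> \<in> borel_measurable M"
proof -
  have [measurable]: "\<nu> \<in> measurable M (count_space UNIV)" by (rule st_meas[OF st])
  have e: "gg \<nu> = (\<lambda>x. SUP k. if \<nu> x \<le> enat k then ereal \<bar>fk k x\<bar> else -\<infinity>)"
    unfolding gg_def maxop_stop_def using SUP_set_bot by (auto intro!: ext)
  show ?thesis unfolding e by measurable
qed

lemma mua_meas[measurable]: "mua \<nu> k \<in> borel_measurable (F k)"
proof -
  have e: "mua \<nu> k = (\<lambda>x. INF m. if (\<forall>m'. m \<le> m' \<longrightarrow> condE M F k (indicator (Gs \<nu> (2 powr real_of_int m'))) x \<le> rr) then ereal (2 powr real_of_int m) else \<infinity>)"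
    unfolding mua_def Qs_def Pm_def using INF_set_top by (auto intro!: ext)
  show ?thesis unfolding e by measurable
qed

lemma mu_meas:
  assumes st: "stopping_time_F M F \<nu>"
  shows "mu \<nu> \<in> borel_measurable M"
proof -
  have e: "mu \<nu> = (\<lambda>x. (\<lambda>e x. case e of enat k \<Rightarrow> mua \<nu> k x | \<infinity> \<Rightarrow> \<infinity>) (\<nu> x) x)"
    unfolding mu_def by simp
  show ?thesis unfolding e
  proof (rule measurable_compose_countable[OF _ st_meas[OF st]])
    fix e :: enat show "(\<lambda>x. case e of enat k \<Rightarrow> mua \<nu> k x | \<infinity> \<Rightarrow> \<infinity>) \<in> borel_measurable M"
      using meas_FM[OF mua_meas[of \<nu>]] by (cases e) auto
  qed
qed

lemma Gs_sets:
  assumes "stopping_time_F M F \<nu>" shows "Gs \<nu> t \<in> sets M"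
proof -
  have [measurable]: "gg \<nu> \<in> borel_measurable M" by (rule gg_meas[OF assms])
  show ?thesis unfolding Gs_def by measurable
qed

lemma Bs_sets:
  assumes "stopping_time_F M F \<nu>" shows "Bs \<nu> \<in> sets M"
proof -
  have [measurable]: "gg \<nu> \<in> borel_measurable M" by (rule gg_meas[OF assms])
  have [measurable]: "mu \<nu> \<in> borel_measurable M" by (rule mu_meas[OF assms])
  show ?thesis unfolding Bs_def by measurable
qed

lemma pred_F: "Measurable.pred (F k) P \<Longrightarrow> {x \<in> space M. P x} \<in> sets (F k)"
  by (drule predE) simp

lemma stc'_sets:
  assumes "k0 \<le> k"
  shows "{x \<in> space M. stc' \<nu> k0 k x} \<in> sets (F k)"
proof -
  have [measurable]: "mua \<nu> k0 \<in> borel_measurable (F k)" using meas_up[OF mua_meas assms] .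
  have [measurable]: "S k \<in> borel_measurable (F k)" by (rule S_meas)
  have [measurable]: "S k0 \<in> borel_measurable (F k)" using meas_up[OF S_meas assms] .
  show ?thesis unfolding stc'_def by (rule pred_F) measurable
qed

lemma nxt_le_iff:
  assumes "\<nu> x = enat k0"
  shows "nxt \<nu> x \<le> enat k \<longleftrightarrow> (\<exists>i. k0 < i \<and> i \<le> k \<and> stc \<nu> k0 i x)"
proof
  assume a: "nxt \<nu> x \<le> enat k"
  then have ex: "\<exists>i>k0. stc \<nu> k0 i x" using assms unfolding nxt_def by (auto split: if_splits)
  then have "nxt \<nu> x = enat (LEAST i. k0 < i \<and> stc \<nu> k0 i x)" using assms unfolding nxt_def by auto
  with a have "(LEAST i. k0 < i \<and> stc \<nu> k0 i x) \<le> k" by simp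
  moreover have "k0 < (LEAST i. k0 < i \<and> stc \<nu> k0 i x) \<and> stc \<nu> k0 (LEAST i. k0 < i \<and> stc \<nu> k0 i x) x"
    using ex by (metis (mono_tags, lifting) LeastI)
  ultimately show "\<exists>i. k0 < i \<and> i \<le> k \<and> stc \<nu> k0 i x" by blast
next
  assume "\<exists>i. k0 < i \<and> i \<le> k \<and> stc \<nu> k0 i x"
  then obtain i where i: "k0 < i" "i \<le> k" "stc \<nu> k0 i x" by blast
  then have "nxt \<nu> x = enat (LEAST i. k0 < i \<and> stc \<nu> k0 i x)" using assms unfolding nxt_def by auto
  moreover have "(LEAST i. k0 < i \<and> stc \<nu> k0 i x) \<le> i" using i by (intro Least_le) auto
  ultimately show "nxt \<nu> x \<le> enat k" using i by simp
qed

lemma nxt_stopping: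
  assumes st: "stopping_time_F M F \<nu>"
  shows "stopping_time_F M F (nxt \<nu>)"
  unfolding stopping_time_F_def
proof
  fix k
  have eq: "{x \<in> space M. nxt \<nu> x \<le> enat k} =
     (\<Union>k0\<in>{..k}. \<Union>i\<in>{k0<..k}. {x \<in> space M. \<nu> x = enat k0} \<inter> {x \<in> space M. stc' \<nu> k0 i x})"
  proof (intro set_eqI iffI)
    fix x assume x: "x \<in> {x \<in> space M. nxt \<nu> x \<le> enat k}"
    then obtain k0 where k0: "\<nu> x = enat k0" unfolding nxt_def by (cases "\<nu> x") auto
    then obtain i where "k0 < i" "i \<le> k" "stc \<nu> k0 i x" using nxt_le_iff x by blast
    then show "x \<in> (\<Union>k0\<in>{..k}. \<Union>i\<in>{k0<..k}. {x \<in> space M. \<nu> x = enat k0} \<inter> {x \<in> space M. stc' \<nu> k0 i x})"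
      using x k0 stc_stc' by fastforce
  next
    fix x assume "x \<in> (\<Union>k0\<in>{..k}. \<Union>i\<in>{k0<..k}. {x \<in> space M. \<nu> x = enat k0} \<inter> {x \<in> space M. stc' \<nu> k0 i x})"
    then obtain k0 i where "k0 < i" "i \<le> k" "\<nu> x = enat k0" "stc' \<nu> k0 i x" "x \<in> space M" by auto
    then show "x \<in> {x \<in> space M. nxt \<nu> x \<le> enat k}" using nxt_le_iff stc_stc' by blast
  qed
  show "{x \<in> space M. nxt \<nu> x \<le> enat k} \<in> sets (F k)"
    unfolding eq
  proof (intro sets.finite_UN ballI finite_atMost finite_greaterThanAtMost sets.Int)
    fix k0 i assume "k0 \<in> {..k}" "i \<in> {k0<..k}"
    then show "{x \<in> space M. \<nu> x = enat k0} \<in> sets (F k)" "{x \<in> space M. stc' \<nu> k0 i x} \<in> sets (F k)"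
      using sets_F_up[OF st_eq[OF st]] sets_F_up[OF stc'_sets] by auto
  qed
qed

lemma nxt_ge: "\<nu> x \<le> nxt \<nu> x"
  unfolding nxt_def by (cases "\<nu> x") (auto simp: Suc_le_eq intro: LeastI2_ex)

lemma nxt_gt: "\<nu> x = enat a \<Longrightarrow> nxt \<nu> x = enat b \<Longrightarrow> a < b"
  unfolding nxt_def by (auto split: if_splits intro: LeastI2_ex)

lemma nxt_stc: "\<nu> x = enat a \<Longrightarrow> nxt \<nu> x = enat b \<Longrightarrow> stc \<nu> a b x"
  unfolding nxt_def by (auto split: if_splits intro: LeastI2_ex)

lemma nxt_nstc: "\<nu> x = enat a \<Longrightarrow> a < i \<Longrightarrow> enat i < nxt \<nu> x \<Longrightarrow> \<not> stc \<nu> a i x"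
  unfolding nxt_def by (auto split: if_splits dest: not_less_Least)

end



context mart_setting
begin

lemma Qs_up: "m \<in> Qs \<nu> k x \<Longrightarrow> m \<le> m' \<Longrightarrow> m' \<in> Qs \<nu> k x"
  unfolding Qs_def by auto

lemma Qs_Pm: "m \<in> Qs \<nu> k x \<Longrightarrow> Pm \<nu> k m x"
  unfolding Qs_def by auto

lemma mua_empty: "Qs \<nu> k x = {} \<Longrightarrow> mua \<nu> k x = \<infinity>"
  unfolding mua_def by (simp add: top_ereal_def)

lemma INF_pow2_int: "(INF m::int. ereal (2 powr real_of_int m)) = 0"
proof (rule antisym)
  show "0 \<le> (INF m::int. ereal (2 powr real_of_int m))" by (rule INF_greatest) simp
  show "(INF m::int. ereal (2 powr real_of_int m)) \<le> 0"
  proof (rule ccontr)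
    assume "\<not> ?thesis"
    then have pos: "0 < (INF m::int. ereal (2 powr real_of_int m))" by simp
    have le1: "(INF m::int. ereal (2 powr real_of_int m)) \<le> 1" by (rule INF_lower2[of 0]) auto
    obtain y where y: "(INF m::int. ereal (2 powr real_of_int m)) = ereal y"
      using pos le1 by (cases "(INF m::int. ereal (2 powr real_of_int m))") auto
    with pos have "0 < y" by simp
    obtain n where n: "(1/2::real) ^ n < y" using real_arch_pow_inv[OF \<open>0 < y\<close>, of "1/2"] by auto
    have "(INF m::int. ereal (2 powr real_of_int m)) \<le> ereal (2 powr real_of_int (- int n))"
      by (rule INF_lower) simp
    also have "2 powr real_of_int (- int n) = (1/2::real) ^ n"
    proof -
      have "2 powr real_of_int (- int n) = inverse (2 powr real n)" by (simp add: powr_minus)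
      also have "2 powr real n = 2 ^ n" by (rule powr_realpow) simp
      finally show ?thesis by (simp add: power_one_over inverse_eq_divide)
    qed
    finally show False using y n by simp
  qed
qed

lemma mua_all: "Qs \<nu> k x = UNIV \<Longrightarrow> mua \<nu> k x = 0"
  unfolding mua_def using INF_pow2_int by simp

lemma mua_least:
  assumes "m \<in> Qs \<nu> k x" "m - 1 \<notin> Qs \<nu> k x"
  shows "mua \<nu> k x = ereal (2 powr real_of_int m)"
  unfolding mua_def
proof (rule antisym)
  show "(INF m\<in>Qs \<nu> k x. ereal (2 powr real_of_int m)) \<le> ereal (2 powr real_of_int m)"
    by (rule INF_lower) (rule assms(1))
  show "ereal (2 powr real_of_int m) \<le> (INF m\<in>Qs \<nu> k x. ereal (2 powr real_of_int m))"
  proof (rule INF_greatest)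
    fix q assume q: "q \<in> Qs \<nu> k x"
    have "m \<le> q"
    proof (rule ccontr)
      assume "\<not> m \<le> q"
      then have "q \<le> m - 1" by simp
      with q have "m - 1 \<in> Qs \<nu> k x" by (rule Qs_up)
      with assms(2) show False by simp
    qed
    then show "ereal (2 powr real_of_int m) \<le> ereal (2 powr real_of_int q)" by simp
  qed
qed

lemma Qs_trichotomy:
  "Qs \<nu> k x = {} \<or> Qs \<nu> k x = UNIV \<or> (\<exists>m. m \<in> Qs \<nu> k x \<and> m - 1 \<notin> Qs \<nu> k x)"
proof (rule ccontr)
  assume a: "\<not> ?thesis"
  then obtain q p where q: "q \<in> Qs \<nu> k x" and p: "p \<notin> Qs \<nu> k x" by blast
  have "\<exists>n::nat. q - int n \<notin> Qs \<nu> k x"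
  proof -
    have "p < q" using q p Qs_up[of q \<nu> k x p] by (cases "q \<le> p") auto
    then have "q - int (nat (q - p)) = p" by simp
    then show ?thesis using p by metis
  qed
  then obtain n' where n': "q - int n' \<notin> Qs \<nu> k x" by blast
  define n0 where "n0 = (LEAST n. q - int n \<notin> Qs \<nu> k x)"
  have n0: "q - int n0 \<notin> Qs \<nu> k x" "\<And>n. q - int n \<notin> Qs \<nu> k x \<Longrightarrow> n0 \<le> n"
    unfolding n0_def using LeastI[of "\<lambda>n. q - int n \<notin> Qs \<nu> k x", OF n'] Least_le[of "\<lambda>n. q - int n \<notin> Qs \<nu> k x"] by auto
  have "n0 \<noteq> 0" using n0(1) q by (cases n0) auto
  then obtain n1 where n1: "n0 = Suc n1" by (cases n0) auto
  have "q - int n1 \<in> Qs \<nu> k x" using n0(2)[of n1] n1 by fastforce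
  moreover have "q - int n1 - 1 = q - int n0" using n1 by simp
  ultimately show False using a n0(1) by metis
qed

lemma integral_ind_mult:
  assumes "A \<in> sets M" "B \<in> sets M"
  shows "(\<integral>x. indicator A x * indicator B x \<partial>M) = measure M (A \<inter> B)"
proof -
  have "(\<lambda>x. indicator A x * indicator B x :: real) = indicator (A \<inter> B)"
    by (auto split: split_indicator)
  then show ?thesis using assms by simp
qed

lemma freeze_gen:
  assumes X: "X \<in> sets (F k)" and B: "B \<in> sets M" and G: "\<And>n. G n \<in> sets M" "incseq G"
    and cov: "X \<inter> B \<subseteq> (\<Union>n. G n)"
    and le: "\<And>n. AE x in M. x \<in> X \<longrightarrow> condE M F k (indicator (G n)) x \<le> rr"
  shows "AE x in M. x \<in> X \<longrightarrow> condE M F k (indicator B) x \<le> rr"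
proof -
  define h where "h = condE M F k (indicator B)"
  define A where "A = {x \<in> space M. x \<in> X \<and> rr < h x}"
  have hm[measurable]: "h \<in> borel_measurable (F k)" unfolding h_def by simp
  have Xm[measurable]: "X \<in> sets (F k)" by (rule X)
  have AF: "A \<in> sets (F k)" unfolding A_def by (rule pred_F) measurable
  have AM: "A \<in> sets M" using sets_F_M[OF AF] .
  have hi: "integrable M h" unfolding h_def using condE_int[of "indicator B"] B by simp
  have intA: "(\<integral>x. indicator A x * condE M F k (indicator C) x \<partial>M) = measure M (A \<inter> C)" if C: "C \<in> sets M" for C
  proof -
    have "(\<integral>x. indicator A x * condE M F k (indicator C) x \<partial>M) = (\<integral>x. indicator A x * indicator C x \<partial>M)"
      by (rule condE_intg) (use AF AM C bdd_int[OF bdd_mult[OF bdd_ind[OF AM] bdd_ind[OF C]]] in auto)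
    also have "\<dots> = measure M (A \<inter> C)" using integral_ind_mult AM C by simp
    finally show ?thesis .
  qed
  have iAc: "integrable M (\<lambda>x. indicator A x * condE M F k (indicator C) x)" if C: "C \<in> sets M" for C
    using bdd_int[OF bdd_mult[OF bdd_ind[OF AM] bdd_condE[OF bdd_ind[OF C]]]] .
  have Gn: "measure M (A \<inter> G n) \<le> rr * measure M A" for n
  proof -
    have "measure M (A \<inter> G n) = (\<integral>x. indicator A x * condE M F k (indicator (G n)) x \<partial>M)"
      using intA[OF G(1)] by simp
    also have "\<dots> \<le> (\<integral>x. indicator A x * rr \<partial>M)"
    proof (rule integral_mono_AE[OF iAc[OF G(1)]])
      show "integrable M (\<lambda>x. indicator A x * rr)" using AM by simp
      show "AE x in M. indicator A x * condE M F k (indicator (G n)) x \<le> indicator A x * rr"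
        using le[of n] by eventually_elim (auto simp: A_def split: split_indicator)
    qed
    also have "\<dots> = rr * measure M A" using AM by simp
    finally show ?thesis .
  qed
  have lim: "(\<lambda>n. measure M (A \<inter> G n)) \<longlonglongrightarrow> measure M (\<Union>n. A \<inter> G n)"
    by (rule finite_Lim_measure_incseq) (use AM G in \<open>auto simp: incseq_def\<close>)
  have "measure M (\<Union>n. A \<inter> G n) \<le> rr * measure M A"
    using LIMSEQ_le_const2[OF lim] Gn by auto
  moreover have "measure M (A \<inter> B) \<le> measure M (\<Union>n. A \<inter> G n)"
    by (rule finite_measure_mono) (use cov AM G A_def in auto)
  ultimately have AB: "measure M (A \<inter> B) \<le> rr * measure M A" by simp
  define w where "w x = indicator A x * (h x - rr)" for x
  have wi: "integrable M w" unfolding w_def right_diff_distrib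
    using iAc[OF B] AM unfolding h_def by simp
  have wint: "integral\<^sup>L M w = measure M (A \<inter> B) - rr * measure M A"
  proof -
    have "integral\<^sup>L M w = (\<integral>x. indicator A x * h x - indicator A x * rr \<partial>M)"
      unfolding w_def by (simp add: right_diff_distrib)
    also have "\<dots> = (\<integral>x. indicator A x * h x \<partial>M) - (\<integral>x. indicator A x * rr \<partial>M)"
      by (rule Bochner_Integration.integral_diff) (use iAc[OF B] AM in \<open>auto simp: h_def\<close>)
    finally show ?thesis using intA[OF B] AM unfolding h_def by simp
  qed
  have wpos: "AE x in M. 0 \<le> w x" unfolding w_def A_def by (auto split: split_indicator)
  have "integral\<^sup>L M w \<le> 0" using wint AB by simp
  moreover have "0 \<le> integral\<^sup>L M w" using integral_nonneg_AE[OF wpos] .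
  ultimately have "integral\<^sup>L M w = 0" by simp
  then have "AE x in M. w x = 0" using integral_nonneg_eq_0_iff_AE[OF wi wpos] by simp
  with AE_space show ?thesis
    by eventually_elim (auto simp: w_def A_def h_def indicator_def split: if_splits)
qed

end



context mart_setting
begin

lemma gg_ge: "\<nu> x \<le> enat k \<Longrightarrow> ereal \<bar>fk k x\<bar> \<le> gg \<nu> x"
  unfolding gg_def maxop_stop_def by (rule SUP_upper) simp

lemma Qs_pred[measurable]: "Measurable.pred (F k) (\<lambda>x. m \<in> Qs \<nu> k x)"
  unfolding Qs_def Pm_def by measurable

lemma ind_empty_AE: "AE x in M. condE M F k (indicator {}) x \<le> rr"
proof -
  have e: "indicator {} = (\<lambda>_. 0::real)" by (auto simp: fun_eq_iff)
  have "AE x in M. condE M F k (\<lambda>_. 0) x = 0" by (rule condE_self) auto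
  then have "AE x in M. condE M F k (\<lambda>_. 0) x \<le> rr" using cfacts(1) by (auto elim: AE_mp)
  then show ?thesis unfolding e .
qed

lemma pos_pow: "0 < (g::ereal) \<Longrightarrow> \<exists>n::nat. ereal (2 powr real_of_int (- int n)) < g"
proof (cases g)
  case (real z)
  assume "0 < g"
  with real have "0 < z" by simp
  obtain n where n: "(1/2::real) ^ n < z" using real_arch_pow_inv[OF \<open>0 < z\<close>, of "1/2"] by auto
  have "2 powr real_of_int (- int n) = (1/2::real) ^ n"
  proof -
    have "2 powr real_of_int (- int n) = inverse (2 powr real n)" by (simp add: powr_minus)
    also have "2 powr real n = 2 ^ n" by (rule powr_realpow) simp
    finally show ?thesis by (simp add: power_one_over inverse_eq_divide)
  qed
  then show ?thesis using n real by (intro exI[of _ n]) simp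
next
  case PInf then show ?thesis by (intro exI[of _ 0]) simp
next
  case MInf
  assume "0 < g" with MInf show ?thesis by simp
qed

lemma freeze:
  assumes st: "stopping_time_F M F \<nu>"
  shows "AE x in M. \<nu> x = enat k0 \<longrightarrow> condE M F k0 (indicator (Bs \<nu>)) x \<le> rr"
proof -
  have E0: "{x \<in> space M. \<nu> x = enat k0} \<in> sets (F k0)" by (rule st_eq[OF st])
  have BsM: "Bs \<nu> \<in> sets M" by (rule Bs_sets[OF st])
  define Xe where "Xe = {x \<in> space M. \<nu> x = enat k0} \<inter> {x \<in> space M. \<forall>m. m \<notin> Qs \<nu> k0 x}"
  define Xa where "Xa = {x \<in> space M. \<nu> x = enat k0} \<inter> {x \<in> space M. \<forall>m. m \<in> Qs \<nu> k0 x}"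
  define Xm where "Xm m = {x \<in> space M. \<nu> x = enat k0} \<inter> {x \<in> space M. m \<in> Qs \<nu> k0 x \<and> m - 1 \<notin> Qs \<nu> k0 x}" for m
  have XeF: "Xe \<in> sets (F k0)" unfolding Xe_def by (intro sets.Int[OF E0] pred_F) measurable
  have XaF: "Xa \<in> sets (F k0)" unfolding Xa_def by (intro sets.Int[OF E0] pred_F) measurable
  have XmF: "Xm m \<in> sets (F k0)" for m unfolding Xm_def by (intro sets.Int[OF E0] pred_F) measurable
  have ae_e: "AE x in M. x \<in> Xe \<longrightarrow> condE M F k0 (indicator (Bs \<nu>)) x \<le> rr"
  proof (rule freeze_gen[OF XeF BsM, where G="\<lambda>_. {}"])
    show "Xe \<inter> Bs \<nu> \<subseteq> (\<Union>n. {})"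
    proof
      fix x assume "x \<in> Xe \<inter> Bs \<nu>"
      then have "\<nu> x = enat k0" "Qs \<nu> k0 x = {}" "mu \<nu> x < gg \<nu> x" unfolding Xe_def Bs_def by auto
      then show "x \<in> (\<Union>n. {})" using mua_empty mu_enat by simp
    qed
  qed (auto simp: incseq_def intro: ind_empty_AE AE_mp)
  define G where "G n = Gs \<nu> (2 powr real_of_int (- int n))" for n
  have ae_a: "AE x in M. x \<in> Xa \<longrightarrow> condE M F k0 (indicator (Bs \<nu>)) x \<le> rr"
  proof (rule freeze_gen[OF XaF BsM, where G=G])
    show "G n \<in> sets M" for n unfolding G_def by (rule Gs_sets[OF st])
    show "incseq G" unfolding incseq_def G_def Gs_def
    proof (intro allI impI subsetI)
      fix m n x assume mn: "(m::nat) \<le> n" and x: "x \<in> {y \<in> space M. ereal (2 powr real_of_int (- int m)) < gg \<nu> y}"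
      have "2 powr real_of_int (- int n) \<le> 2 powr real_of_int (- int m)" using mn by simp
      then have le: "ereal (2 powr real_of_int (- int n)) \<le> ereal (2 powr real_of_int (- int m))" by simp
      have lt: "ereal (2 powr real_of_int (- int m)) < gg \<nu> x" using x by blast
      have "ereal (2 powr real_of_int (- int n)) < gg \<nu> x" by (rule le_less_trans[OF le lt])
      then show "x \<in> {y \<in> space M. ereal (2 powr real_of_int (- int n)) < gg \<nu> y}"
        using x by blast
    qed
    show "Xa \<inter> Bs \<nu> \<subseteq> (\<Union>n. G n)"
    proof
      fix x assume x: "x \<in> Xa \<inter> Bs \<nu>"
      then have "\<nu> x = enat k0" "Qs \<nu> k0 x = UNIV" "mu \<nu> x < gg \<nu> x" "x \<in> space M" unfolding Xa_def Bs_def by auto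
      then have "0 < gg \<nu> x" using mua_all mu_enat by simp
      then obtain n where "ereal (2 powr real_of_int (- int n)) < gg \<nu> x" using pos_pow by blast
      then show "x \<in> (\<Union>n. G n)" using \<open>x \<in> space M\<close> unfolding G_def Gs_def by auto
    qed
    show "AE x in M. x \<in> Xa \<longrightarrow> condE M F k0 (indicator (G n)) x \<le> rr" for n
    proof (rule AE_I2, rule impI)
      fix x assume "x \<in> Xa"
      then have "- int n \<in> Qs \<nu> k0 x" unfolding Xa_def by auto
      then show "condE M F k0 (indicator (G n)) x \<le> rr" using Qs_Pm unfolding Pm_def G_def by blast
    qed
  qed
  have ae_m: "AE x in M. x \<in> Xm m \<longrightarrow> condE M F k0 (indicator (Bs \<nu>)) x \<le> rr" for m
  proof (rule freeze_gen[OF XmF BsM, where G="\<lambda>_. Gs \<nu> (2 powr real_of_int m)"])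
    show "Gs \<nu> (2 powr real_of_int m) \<in> sets M" by (rule Gs_sets[OF st])
    show "Xm m \<inter> Bs \<nu> \<subseteq> (\<Union>n. Gs \<nu> (2 powr real_of_int m))"
    proof
      fix x assume x: "x \<in> Xm m \<inter> Bs \<nu>"
      then have "\<nu> x = enat k0" "m \<in> Qs \<nu> k0 x" "m - 1 \<notin> Qs \<nu> k0 x" "mu \<nu> x < gg \<nu> x" "x \<in> space M"
        unfolding Xm_def Bs_def by auto
      then have "ereal (2 powr real_of_int m) < gg \<nu> x" using mua_least mu_enat by simp
      then show "x \<in> (\<Union>n. Gs \<nu> (2 powr real_of_int m))" using \<open>x \<in> space M\<close> unfolding Gs_def by auto
    qed
    show "AE x in M. x \<in> Xm m \<longrightarrow> condE M F k0 (indicator (Gs \<nu> (2 powr real_of_int m))) x \<le> rr" for n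
    proof (rule AE_I2, rule impI)
      fix x assume "x \<in> Xm m"
      then have "m \<in> Qs \<nu> k0 x" unfolding Xm_def by auto
      then show "condE M F k0 (indicator (Gs \<nu> (2 powr real_of_int m))) x \<le> rr" using Qs_Pm unfolding Pm_def by blast
    qed
  qed (simp add: incseq_def)
  have ae_m': "AE x in M. \<forall>m. x \<in> Xm m \<longrightarrow> condE M F k0 (indicator (Bs \<nu>)) x \<le> rr"
    unfolding AE_all_countable using ae_m by blast
  show ?thesis
    using ae_e ae_a ae_m' AE_space
  proof eventually_elim
    case (elim x)
    show ?case
    proof
      assume nu: "\<nu> x = enat k0"
      from Qs_trichotomy[of \<nu> k0 x] show "condE M F k0 (indicator (Bs \<nu>)) x \<le> rr"
      proof (elim disjE exE)
        assume "Qs \<nu> k0 x = {}" then show ?thesis using elim nu unfolding Xe_def by auto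
      next
        assume "Qs \<nu> k0 x = UNIV" then show ?thesis using elim nu unfolding Xa_def by auto
      next
        fix m assume "m \<in> Qs \<nu> k0 x \<and> m - 1 \<notin> Qs \<nu> k0 x"
        then show ?thesis using elim nu unfolding Xm_def by auto
      qed
    qed
  qed
qed

end



context mart_setting
begin

lemma Gs_mono: "t \<le> t' \<Longrightarrow> Gs \<nu> t' \<subseteq> Gs \<nu> t"
  unfolding Gs_def by (auto, metis ereal_less_eq(3) le_less_trans)

lemma mono_fact:
  assumes st: "stopping_time_F M F \<nu>"
  shows "AE x in M. \<forall>t\<in>\<rat>. \<forall>m::int. t \<le> 2 powr real_of_int m \<longrightarrow>
     condE M F k0 (indicator (Gs \<nu> (2 powr real_of_int m))) x \<le> condE M F k0 (indicator (Gs \<nu> t)) x"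
proof -
  have one: "AE x in M. condE M F k0 (indicator (Gs \<nu> (2 powr real_of_int m))) x \<le> condE M F k0 (indicator (Gs \<nu> t)) x"
    if "t \<le> 2 powr real_of_int m" for t m
  proof (rule condE_mono)
    show "AE x in M. indicator (Gs \<nu> (2 powr real_of_int m)) x \<le> (indicator (Gs \<nu> t) x :: real)"
      using Gs_mono[OF that, of \<nu>] by (auto split: split_indicator)
  qed (use Gs_sets[OF st] in auto)
  have "AE x in M. \<forall>m::int. t \<le> 2 powr real_of_int m \<longrightarrow>
     condE M F k0 (indicator (Gs \<nu> (2 powr real_of_int m))) x \<le> condE M F k0 (indicator (Gs \<nu> t)) x" for t
    unfolding AE_all_countable using one by (auto intro: AE_mp)
  then show ?thesis by (intro AE_ball_countable[THEN iffD2] countable_rat) auto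
qed

lemma big_fact:
  assumes st: "stopping_time_F M F \<nu>"
  shows "AE x in M. \<nu> x = enat k0 \<and> ereal t < ereal \<bar>fk k0 x\<bar> \<longrightarrow> 1 \<le> condE M F k0 (indicator (Gs \<nu> t)) x"
proof -
  define D where "D = {x \<in> space M. \<nu> x = enat k0} \<inter> {x \<in> space M. t < \<bar>fk k0 x\<bar>}"
  have DF: "D \<in> sets (F k0)" unfolding D_def by (intro sets.Int[OF st_eq[OF st]] pred_F) measurable
  have DM: "D \<in> sets M" using sets_F_M[OF DF] .
  have DG: "D \<subseteq> Gs \<nu> t"
  proof
    fix x assume "x \<in> D"
    then have "\<nu> x = enat k0" "t < \<bar>fk k0 x\<bar>" "x \<in> space M" unfolding D_def by auto
    then show "x \<in> Gs \<nu> t" unfolding Gs_def using gg_ge[of \<nu> x k0] by (auto, meson less_ereal.simps(1) less_le_trans)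
  qed
  have a1: "AE x in M. condE M F k0 (indicator D) x = indicator D x"
    by (rule condE_self) (use DF DM in auto)
  have a2: "AE x in M. condE M F k0 (indicator D) x \<le> condE M F k0 (indicator (Gs \<nu> t)) x"
    by (rule condE_mono) (use DG DM Gs_sets[OF st] in \<open>auto split: split_indicator\<close>)
  show ?thesis using a1 a2 AE_space
    by eventually_elim (auto simp: D_def split: split_indicator)
qed

lemma D2'_fact:
  assumes st: "stopping_time_F M F \<nu>"
  shows "AE x in M. \<nu> x = enat k0 \<longrightarrow> ereal \<bar>fk k0 x\<bar> \<le> mua \<nu> k0 x"
proof -
  have "AE x in M. \<forall>m::int. \<nu> x = enat k0 \<and> ereal (2 powr real_of_int m) < ereal \<bar>fk k0 x\<bar> \<longrightarrow>
       1 \<le> condE M F k0 (indicator (Gs \<nu> (2 powr real_of_int m))) x"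
    unfolding AE_all_countable using big_fact[OF st] by blast
  then show ?thesis
  proof eventually_elim
    case (elim x)
    show ?case
    proof
      assume nu: "\<nu> x = enat k0"
      show "ereal \<bar>fk k0 x\<bar> \<le> mua \<nu> k0 x" unfolding mua_def
      proof (rule INF_greatest)
        fix m assume "m \<in> Qs \<nu> k0 x"
        then have "condE M F k0 (indicator (Gs \<nu> (2 powr real_of_int m))) x \<le> rr"
          using Qs_Pm unfolding Pm_def by blast
        then have "\<not> ereal (2 powr real_of_int m) < ereal \<bar>fk k0 x\<bar>" using elim nu cfacts(6) by force
        then show "ereal \<bar>fk k0 x\<bar> \<le> ereal (2 powr real_of_int m)" by simp
      qed
    qed
  qed
qed

lemma two_pow_bound:
  fixes y :: ereal and t :: real
  assumes "\<And>m::int. t \<le> 2 powr real_of_int m \<Longrightarrow> y \<le> ereal (2 powr real_of_int m)" "0 \<le> t"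
  shows "y \<le> ereal (2 * t)"
proof (rule ccontr)
  assume "\<not> ?thesis"
  then have lt: "ereal (2 * t) < y" by simp
  have ex: "\<exists>m::int. t \<le> 2 powr real_of_int m"
  proof -
    define n where "n = nat \<lceil>t\<rceil>"
    have "t \<le> 2 powr real_of_int (int n)"
    proof -
      have "t \<le> real n" unfolding n_def by linarith
      also have "\<dots> \<le> 2 ^ n" by (rule less_imp_le, rule of_nat_less_two_power)
      also have "(2::real) ^ n = 2 powr real n" by (rule powr_realpow[symmetric]) simp
      also have "real n = real_of_int (int n)" by simp
      finally show ?thesis .
    qed
    then show ?thesis by blast
  qed
  then obtain m0 where m0: "t \<le> 2 powr real_of_int m0" by blast
  have yfin: "y \<le> ereal (2 powr real_of_int m0)" using assms(1)[OF m0] .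
  obtain z where z: "y = ereal z" using yfin lt by (cases y) auto
  then have zt: "2 * t < z" using lt by simp
  have zpos: "0 < z" using zt assms(2) by simp
  define m where "m = \<lceil>log 2 (z / 2)\<rceil>"
  have l: "log 2 (z / 2) \<le> real_of_int m" "real_of_int m < log 2 (z / 2) + 1" unfolding m_def by linarith+
  have "z / 2 = 2 powr log 2 (z / 2)" using zpos by simp
  also have "\<dots> \<le> 2 powr real_of_int m" using l(1) by simp
  finally have c1: "z / 2 \<le> 2 powr real_of_int m" .
  have "2 powr real_of_int m < 2 powr (log 2 (z / 2) + 1)" using l(2) by simp
  also have "\<dots> = z" using zpos by (simp add: powr_add)
  finally have c2: "2 powr real_of_int m < z" .
  have "t \<le> 2 powr real_of_int m" using c1 zt by simp
  then have "y \<le> ereal (2 powr real_of_int m)" by (rule assms(1))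
  then show False using z c2 by simp
qed

lemma ereal_half_le:
  fixes a s :: ereal
  assumes "a \<le> ereal 2 * s" "0 \<le> a"
  shows "a * ereal (1/2) \<le> s"
  using assms by (cases a; cases s) auto

lemma D1_fact:
  assumes st: "stopping_time_F M F \<nu>"
  shows "AE x in M. \<nu> x = enat k0 \<longrightarrow> mua \<nu> k0 x \<le> ereal 2 * Pr M F rr k0 (gg \<nu>) x"
proof -
  have bq: "AE x in M. \<forall>t\<in>\<rat>. \<nu> x = enat k0 \<and> ereal t < ereal \<bar>fk k0 x\<bar> \<longrightarrow>
       1 \<le> condE M F k0 (indicator (Gs \<nu> t)) x"
    by (intro AE_ball_countable[THEN iffD2] countable_rat) (use big_fact[OF st] in auto)
  show ?thesis using bq mono_fact[OF st, of k0]
  proof eventually_elim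
    case (elim x)
    show ?case
    proof
      assume nu: "\<nu> x = enat k0"
      have mpos: "0 \<le> mua \<nu> k0 x" unfolding mua_def by (rule INF_greatest) simp
      have key: "mua \<nu> k0 x \<le> ereal 2 * s"
        if s: "s \<in> {ereal t |t. t \<in> \<rat> \<and> condE M F k0 (indicator {y \<in> space M. ereal t < gg \<nu> y}) x \<le> rr}" for s
      proof -
        obtain t where t: "s = ereal t" "t \<in> \<rat>" "condE M F k0 (indicator (Gs \<nu> t)) x \<le> rr"
          using s unfolding Gs_def by auto
        have "\<not> t < \<bar>fk k0 x\<bar>" using elim(1) t nu cfacts(6) by force
        then have t0: "0 \<le> t" by simp
        have "mua \<nu> k0 x \<le> ereal (2 powr real_of_int m)" if tm: "t \<le> 2 powr real_of_int m" for m
        proof -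
          have "m \<in> Qs \<nu> k0 x" unfolding Qs_def Pm_def
          proof (intro CollectI allI impI)
            fix m' assume "m \<le> m'"
            then have "2 powr real_of_int m \<le> 2 powr real_of_int m'" by (intro powr_mono) auto
            then have "t \<le> 2 powr real_of_int m'" using tm by linarith
            then show "condE M F k0 (indicator (Gs \<nu> (2 powr real_of_int m'))) x \<le> rr"
              using elim(2) t by (meson order_trans)
          qed
          then show ?thesis unfolding mua_def by (rule INF_lower)
        qed
        then have "mua \<nu> k0 x \<le> ereal (2 * t)" using two_pow_bound t0 by blast
        then show ?thesis using t by simp
      qed
      have "mua \<nu> k0 x * ereal (1/2) \<le> Pr M F rr k0 (gg \<nu>) x"
        unfolding Pr_def by (rule Inf_greatest) (use key mpos ereal_half_le in blast)
      then have "ereal 2 * (mua \<nu> k0 x * ereal (1/2)) \<le> ereal 2 * Pr M F rr k0 (gg \<nu>) x"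
        by (rule ereal_mult_left_mono) simp
      moreover have "ereal 2 * (mua \<nu> k0 x * ereal (1/2)) = mua \<nu> k0 x"
        by (cases "mua \<nu> k0 x") auto
      ultimately show "mua \<nu> k0 x \<le> ereal 2 * Pr M F rr k0 (gg \<nu>) x" by simp
    qed
  qed
qed

end



context mart_setting
begin

lemma Rg_fact:
  assumes st: "stopping_time_F M F \<nu>" and k: "k0 < k"
  shows "AE x in M. \<nu> x = enat k0 \<and> mua \<nu> k0 x < ereal \<bar>fk k x\<bar> \<longrightarrow> 1 \<le> R * condE M F (k - 1) (indicator (Bs \<nu>)) x"
proof -
  have [measurable]: "mua \<nu> k0 \<in> borel_measurable (F k)" using meas_up[OF mua_meas] k by simp
  define D where "D = {x \<in> space M. \<nu> x = enat k0} \<inter> {x \<in> space M. mua \<nu> k0 x < ereal \<bar>fk k x\<bar>}"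
  have DF: "D \<in> sets (F k)" unfolding D_def
    by (intro sets.Int sets_F_up[OF st_eq[OF st]] pred_F) (use k in auto)
  have DM: "D \<in> sets M" using sets_F_M[OF DF] .
  have BM: "Bs \<nu> \<in> sets M" by (rule Bs_sets[OF st])
  have DB: "D \<subseteq> Bs \<nu>"
  proof
    fix x assume "x \<in> D"
    then have x: "\<nu> x = enat k0" "mua \<nu> k0 x < ereal \<bar>fk k x\<bar>" "x \<in> space M" unfolding D_def by auto
    have "ereal \<bar>fk k x\<bar> \<le> gg \<nu> x" by (rule gg_ge) (use x k in simp)
    then show "x \<in> Bs \<nu>" unfolding Bs_def using x mu_enat[of \<nu> x k0, OF x(1)] by auto
  qed
  have a1: "AE x in M. condE M F k (indicator D) x = indicator D x"
    by (rule condE_self) (use DF DM in auto)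
  have a2: "AE x in M. condE M F k (indicator D) x \<le> R * condE M F (k - 1) (indicator D) x"
    using reg k DM unfolding regular_filtration_def by auto
  have a3: "AE x in M. condE M F (k - 1) (indicator D) x \<le> condE M F (k - 1) (indicator (Bs \<nu>)) x"
    by (rule condE_mono) (use DB DM BM in \<open>auto split: split_indicator\<close>)
  have R0: "0 \<le> R" using R_ge1 by simp
  show ?thesis using a1 a2 a3 AE_space
  proof eventually_elim
    case (elim x)
    show ?case
    proof
      assume "\<nu> x = enat k0 \<and> mua \<nu> k0 x < ereal \<bar>fk k x\<bar>"
      then have "x \<in> D" unfolding D_def using elim by auto
      then have "1 \<le> R * condE M F (k - 1) (indicator D) x" using elim by simp
      also have "\<dots> \<le> R * condE M F (k - 1) (indicator (Bs \<nu>)) x" using elim(3) R0 by (rule mult_left_mono)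
      finally show "1 \<le> R * condE M F (k - 1) (indicator (Bs \<nu>)) x" .
    qed
  qed
qed

lemma D2_fact:
  assumes st: "stopping_time_F M F \<nu>"
  shows "AE x in M. \<forall>k0 k. \<nu> x = enat k0 \<longrightarrow> k0 \<le> k \<longrightarrow> enat k \<le> nxt \<nu> x \<longrightarrow> ereal \<bar>fk k x\<bar> \<le> mu \<nu> x"
proof -
  have fz: "AE x in M. \<forall>k0. \<nu> x = enat k0 \<longrightarrow> condE M F k0 (indicator (Bs \<nu>)) x \<le> rr"
    unfolding AE_all_countable using freeze[OF st] by blast
  have d2: "AE x in M. \<forall>k0. \<nu> x = enat k0 \<longrightarrow> ereal \<bar>fk k0 x\<bar> \<le> mua \<nu> k0 x"
    unfolding AE_all_countable using D2'_fact[OF st] by blast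
  have rg: "AE x in M. \<forall>k0 k. k0 < k \<longrightarrow> \<nu> x = enat k0 \<and> mua \<nu> k0 x < ereal \<bar>fk k x\<bar> \<longrightarrow> 1 \<le> R * condE M F (k - 1) (indicator (Bs \<nu>)) x"
    unfolding AE_all_countable using Rg_fact[OF st] by (auto intro: AE_I2)
  show ?thesis using fz d2 rg
  proof eventually_elim
    case (elim x)
    show ?case
    proof (intro allI impI)
      fix k0 k assume nu: "\<nu> x = enat k0" and kk: "k0 \<le> k" and kn: "enat k \<le> nxt \<nu> x"
      show "ereal \<bar>fk k x\<bar> \<le> mu \<nu> x"
      proof (cases "k = k0")
        case True then show ?thesis using elim(2) nu mu_enat by simp
      next
        case False
        then have lt: "k0 < k" using kk by simp
        have th_le: "condE M F (k - 1) (indicator (Bs \<nu>)) x \<le> th"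
        proof (cases "k - 1 = k0")
          case True then show ?thesis using elim(1) nu cfacts(2) by force
        next
          case False
          then have "k0 < k - 1" using lt by simp
          moreover have "enat (k - 1) < nxt \<nu> x"
          proof -
            have "enat (k - 1) < enat k" using lt by simp
            then show ?thesis using kn by (rule less_le_trans)
          qed
          ultimately have "\<not> stc \<nu> k0 (k - 1) x" using nxt_nstc nu by blast
          then show ?thesis unfolding stc_def by simp
        qed
        show ?thesis
        proof (rule ccontr)
          assume "\<not> ?thesis"
          then have "mua \<nu> k0 x < ereal \<bar>fk k x\<bar>" using mu_enat[of \<nu> x k0, OF nu] by simp
          then have "1 \<le> R * condE M F (k - 1) (indicator (Bs \<nu>)) x" using elim(3) lt nu by blast
          also have "\<dots> \<le> R * th" using th_le R_ge1 by (intro mult_left_mono) auto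
          finally show False using cfacts(3) by (simp add: mult.commute)
        qed
      qed
    qed
  qed
qed

end



context mart_setting
begin

lemma tel: "k0 \<le> e \<Longrightarrow> (\<Sum>i\<in>{k0<..e}. dd i x) = fk e x - fk k0 x"
proof (induction e)
  case 0 then show ?case by simp
next
  case (Suc e)
  show ?case
  proof (cases "k0 = Suc e")
    case True then show ?thesis by simp
  next
    case False
    then have "k0 \<le> e" using Suc.prems by simp
    moreover have "{k0<..Suc e} = insert (Suc e) {k0<..e}" using \<open>k0 \<le> e\<close> by auto
    ultimately show ?thesis using Suc.IH by (simp add: dd_Suc)
  qed
qed

lemma S_tel: "k0 \<le> e \<Longrightarrow> S e x - S k0 x = (\<Sum>i\<in>{k0<..e}. \<sigma> i x * dd i x)"
proof (induction e)
  case 0 then show ?case by simp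
next
  case (Suc e)
  show ?case
  proof (cases "k0 = Suc e")
    case True then show ?thesis by simp
  next
    case False
    then have "k0 \<le> e" using Suc.prems by simp
    moreover have "{k0<..Suc e} = insert (Suc e) {k0<..e}" using \<open>k0 \<le> e\<close> by auto
    ultimately show ?thesis using Suc.IH by (simp add: S_def)
  qed
qed

definition trunc :: "nat \<Rightarrow> enat \<Rightarrow> nat" where
  "trunc n N = (case N of enat b \<Rightarrow> min n b | \<infinity> \<Rightarrow> n)"

lemma sum_trunc:
  "(\<Sum>i\<in>{k0<..n}. (if enat i \<le> N then g i else 0)) = (\<Sum>i\<in>{k0<..trunc n N}. g i)"
proof -
  have "(\<Sum>i\<in>{k0<..n}. (if enat i \<le> N then g i else 0)) = (\<Sum>i\<in>{i \<in> {k0<..n}. enat i \<le> N}. g i)"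
    by (rule sum.inter_filter[symmetric]) simp
  also have "{i \<in> {k0<..n}. enat i \<le> N} = {k0<..trunc n N}"
    unfolding trunc_def by (cases N) auto
  finally show ?thesis .
qed

lemma ind_int:
  assumes C: "C \<in> sets (F k)" and B: "B \<in> sets M"
  shows "(\<integral>x. indicator C x * condE M F k (indicator B) x \<partial>M) = measure M (C \<inter> B)"
proof -
  have CM: "C \<in> sets M" using sets_F_M[OF C] .
  have "(\<integral>x. indicator C x * condE M F k (indicator B) x \<partial>M) = (\<integral>x. indicator C x * indicator B x \<partial>M)"
    by (rule condE_intg) (use C CM B bdd_int[OF bdd_mult[OF bdd_ind[OF CM] bdd_ind[OF B]]] in auto)
  also have "\<dots> = measure M (C \<inter> B)" using integral_ind_mult CM B by simp
  finally show ?thesis .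
qed

lemma stopped_piece:
  assumes st: "stopping_time_F M F \<nu>" and A: "A \<in> stopped_sets M F \<nu>"
  shows "A \<inter> {x \<in> space M. \<nu> x = enat k0} \<in> sets (F k0)"
proof (cases k0)
  case 0
  have "A \<inter> {x \<in> space M. \<nu> x = enat k0} = A \<inter> {x \<in> space M. \<nu> x \<le> enat 0}" using 0 by (auto simp: enat_0)
  then show ?thesis using A 0 unfolding stopped_sets_def by auto
next
  case (Suc j)
  have eq: "A \<inter> {x \<in> space M. \<nu> x = enat k0} = (A \<inter> {x \<in> space M. \<nu> x \<le> enat k0}) - (A \<inter> {x \<in> space M. \<nu> x \<le> enat j})"
  proof (intro set_eqI iffI)
    fix x assume "x \<in> A \<inter> {x \<in> space M. \<nu> x = enat k0}"
    then show "x \<in> (A \<inter> {x \<in> space M. \<nu> x \<le> enat k0}) - (A \<inter> {x \<in> space M. \<nu> x \<le> enat j})" using Suc by auto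
  next
    fix x assume a: "x \<in> (A \<inter> {x \<in> space M. \<nu> x \<le> enat k0}) - (A \<inter> {x \<in> space M. \<nu> x \<le> enat j})"
    then obtain n where n: "\<nu> x = enat n" by (cases "\<nu> x") auto
    with a Suc show "x \<in> A \<inter> {x \<in> space M. \<nu> x = enat k0}" by auto
  qed
  have h1: "A \<inter> {x \<in> space M. \<nu> x \<le> enat j} \<in> sets (F k0)"
  proof -
    have "A \<inter> {x \<in> space M. \<nu> x \<le> enat j} \<in> sets (F j)" using A unfolding stopped_sets_def by blast
    then show ?thesis by (rule sets_F_up) (use Suc in simp)
  qed
  have h2: "A \<inter> {x \<in> space M. \<nu> x \<le> enat k0} \<in> sets (F k0)" using A unfolding stopped_sets_def by blast
  show ?thesis unfolding eq by (rule sets.Diff[OF h2 h1])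
qed

lemma E1_bound:
  assumes st: "stopping_time_F M F \<nu>" and AF: "A' \<in> sets (F k0)" and Asub: "A' \<subseteq> {x \<in> space M. \<nu> x = enat k0}"
  shows "th * measure M (A' \<inter> {x \<in> space M. \<exists>k>k0. th < condE M F k (indicator (Bs \<nu>)) x}) \<le> rr * measure M A'"
proof -
  define h where "h i = condE M F i (indicator (Bs \<nu>))" for i
  have BM: "Bs \<nu> \<in> sets M" by (rule Bs_sets[OF st])
  have AM: "A' \<in> sets M" using sets_F_M[OF AF] .
  define D where "D k = (if k0 < k then A' \<inter> {x \<in> space M. th < h k x} \<inter> {x \<in> space M. \<forall>i\<in>{k0<..<k}. \<not> th < h i x} else {})" for k
  have DF: "D k \<in> sets (F k)" for k
  proof (cases "k0 < k")
    case True
    have "{x \<in> space M. \<forall>i\<in>{k0<..<k}. \<not> th < h i x} \<in> sets (F k)"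
    proof (cases "{k0<..<k} = {}")
      case True then show ?thesis using sets.top[of "F k"] by simp
    next
      case False
      have eqI: "{x \<in> space M. \<forall>i\<in>{k0<..<k}. \<not> th < h i x} = (\<Inter>i\<in>{k0<..<k}. {x \<in> space M. \<not> th < h i x})"
        using False by auto
      show ?thesis unfolding eqI
      proof (rule sets.finite_INT[OF finite_greaterThanLessThan False])
        fix i assume "i \<in> {k0<..<k}"
        then have [measurable]: "h i \<in> borel_measurable (F k)" using meas_up[OF condE_meas[of i]] unfolding h_def by simp
        show "{x \<in> space M. \<not> th < h i x} \<in> sets (F k)" by (rule pred_F) measurable
      qed
    qed
    moreover have "{x \<in> space M. th < h k x} \<in> sets (F k)" unfolding h_def by (rule pred_F) measurable
    moreover have "A' \<in> sets (F k)" using sets_F_up[OF AF] True by simp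
    ultimately show ?thesis unfolding D_def using True by simp
  next
    case False then show ?thesis unfolding D_def by simp
  qed
  have DM: "D k \<in> sets M" for k using sets_F_M[OF DF] .
  have disj: "disjoint_family D"
    unfolding disjoint_family_on_def
  proof (intro ballI impI)
    fix k k' assume "k \<in> (UNIV::nat set)" "k' \<in> (UNIV::nat set)" "k \<noteq> k'"
    show "D k \<inter> D k' = {}"
    proof (cases "k < k'")
      case True then show ?thesis unfolding D_def by auto
    next
      case False then have "k' < k" using \<open>k \<noteq> k'\<close> by simp
      then show ?thesis unfolding D_def by auto
    qed
  qed
  have UD: "(\<Union>k. D k) = A' \<inter> {x \<in> space M. \<exists>k>k0. th < h k x}"
  proof (intro set_eqI iffI)
    fix x assume "x \<in> (\<Union>k. D k)"
    then show "x \<in> A' \<inter> {x \<in> space M. \<exists>k>k0. th < h k x}" unfolding D_def by (auto split: if_splits)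
  next
    fix x assume x: "x \<in> A' \<inter> {x \<in> space M. \<exists>k>k0. th < h k x}"
    define k where "k = (LEAST k. k0 < k \<and> th < h k x)"
    have ex: "\<exists>k. k0 < k \<and> th < h k x" using x by auto
    have k: "k0 < k \<and> th < h k x" unfolding k_def by (rule LeastI_ex[OF ex])
    have "\<not> th < h i x" if "i \<in> {k0<..<k}" for i
      using that not_less_Least[of i "\<lambda>k. k0 < k \<and> th < h k x"] unfolding k_def[symmetric] by auto
    then have "x \<in> D k" unfolding D_def using x k by auto
    then show "x \<in> (\<Union>k. D k)" by blast
  qed
  have Dk: "th * measure M (D k) \<le> measure M (D k \<inter> Bs \<nu>)" for k
  proof -
    have "th * measure M (D k) = (\<integral>x. indicator (D k) x * th \<partial>M)" using DM[of k] by simp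
    also have "\<dots> \<le> (\<integral>x. indicator (D k) x * h k x \<partial>M)"
    proof (rule integral_mono)
      show "integrable M (\<lambda>x. indicator (D k) x * th)" using DM[of k] by simp
      show "integrable M (\<lambda>x. indicator (D k) x * h k x)"
        unfolding h_def using bdd_int[OF bdd_mult[OF bdd_ind[OF DM[of k]] bdd_condE[OF bdd_ind[OF BM]]]] .
      fix x assume "x \<in> space M"
      show "indicator (D k) x * th \<le> indicator (D k) x * h k x"
        unfolding D_def by (auto split: split_indicator if_splits)
    qed
    also have "\<dots> = measure M (D k \<inter> Bs \<nu>)" unfolding h_def by (rule ind_int[OF DF BM])
    finally show ?thesis .
  qed
  have s1: "(\<lambda>k. th * measure M (D k)) sums (th * measure M (\<Union>k. D k))"
    by (rule sums_mult[OF finite_measure_UNION]) (use DM disj in auto)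
  have s2: "(\<lambda>k. measure M (D k \<inter> Bs \<nu>)) sums (measure M (\<Union>k. D k \<inter> Bs \<nu>))"
    by (rule finite_measure_UNION) (use DM BM disj in \<open>auto simp: disjoint_family_on_def\<close>)
  have "th * measure M (\<Union>k. D k) \<le> measure M (\<Union>k. D k \<inter> Bs \<nu>)"
    by (rule sums_le[OF _ s1 s2]) (use Dk in auto)
  also have "\<dots> \<le> measure M (A' \<inter> Bs \<nu>)"
    by (rule finite_measure_mono) (use UD AM BM in auto)
  also have "\<dots> = (\<integral>x. indicator A' x * h k0 x \<partial>M)" unfolding h_def by (rule ind_int[OF AF BM, symmetric])
  also have "\<dots> \<le> (\<integral>x. indicator A' x * rr \<partial>M)"
  proof (rule integral_mono_AE)
    show "integrable M (\<lambda>x. indicator A' x * h k0 x)"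
      unfolding h_def using bdd_int[OF bdd_mult[OF bdd_ind[OF AM] bdd_condE[OF bdd_ind[OF BM]]]] .
    show "integrable M (\<lambda>x. indicator A' x * rr)" using AM by simp
    show "AE x in M. indicator A' x * h k0 x \<le> indicator A' x * rr"
      using freeze[OF st, of k0] by eventually_elim (use Asub in \<open>auto simp: h_def split: split_indicator\<close>)
  qed
  also have "\<dots> = rr * measure M A'" using AM by simp
  finally show ?thesis unfolding UD h_def .
qed

end



context mart_setting
begin

definition E2 :: "('a \<Rightarrow> enat) \<Rightarrow> nat \<Rightarrow> 'a set" where
  "E2 \<nu> k0 = {x \<in> space M. \<exists>b. nxt \<nu> x = enat b \<and> ereal KK * mu \<nu> x < ereal \<bar>S b x - S k0 x\<bar>}"

lemma S_measM[measurable]: "S l \<in> borel_measurable M"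
  using meas_FM[OF S_meas] .

lemma E2_sets:
  assumes st: "stopping_time_F M F \<nu>"
  shows "E2 \<nu> k0 \<in> sets M"
proof -
  have [measurable]: "nxt \<nu> \<in> measurable M (count_space UNIV)" by (rule st_meas[OF nxt_stopping[OF st]])
  have [measurable]: "mu \<nu> \<in> borel_measurable M" by (rule mu_meas[OF st])
  show ?thesis unfolding E2_def by measurable
qed

lemma trunc_le: "enat (trunc n N) \<le> N"
  unfolding trunc_def by (cases N) auto

lemma trunc_enat: "b \<le> n \<Longrightarrow> trunc n (enat b) = b"
  unfolding trunc_def by simp

lemma enat_le_pred: "0 < i \<Longrightarrow> (enat i \<le> N) = (\<not> N \<le> enat (i - 1))"
  by (cases N) auto

lemma E2_bound_pos:
  assumes st: "stopping_time_F M F \<nu>" and AF: "A' \<in> sets (F k0)"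
    and Asub: "A' \<subseteq> {x \<in> space M. \<nu> x = enat k0}"
    and c: "0 < c" and muc: "\<And>x. x \<in> A' \<Longrightarrow> mu \<nu> x = ereal c"
  shows "measure M (A' \<inter> E2 \<nu> k0) \<le> 4 / KK\<^sup>2 * measure M A'"
proof -
  have AM: "A' \<in> sets M" using sets_F_M[OF AF] .
  have nst: "stopping_time_F M F (nxt \<nu>)" by (rule nxt_stopping[OF st])
  have [measurable]: "nxt \<nu> \<in> measurable M (count_space UNIV)" by (rule st_meas[OF nst])
  have [measurable]: "mu \<nu> \<in> borel_measurable M" by (rule mu_meas[OF st])
  have [measurable]: "A' \<in> sets M" by (rule AM)
  define T where "T i = {x \<in> space M. enat i \<le> nxt \<nu> x}" for i
  define b where "b i = (if k0 < i then indicator (A' \<inter> T i) else (\<lambda>_. 0::real))" for i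
  have TF: "T i \<in> sets (F (i - 1))" if "0 < i" for i
  proof -
    have "T i = space M - {x \<in> space M. nxt \<nu> x \<le> enat (i - 1)}"
      unfolding T_def using enat_le_pred[OF that] by auto
    then show ?thesis using nst unfolding stopping_time_F_def
      by (metis sets.compl_sets space_F)
  qed
  have bm: "b i \<in> borel_measurable (F (i - 1))" for i
  proof (cases "k0 < i")
    case True
    have "A' \<inter> T i \<in> sets (F (i - 1))"
      using sets_F_up[OF AF, of "i - 1"] TF[of i] True by (intro sets.Int) auto
    then show ?thesis unfolding b_def using True by simp
  next
    case False then show ?thesis unfolding b_def by simp
  qed
  have TM: "T i \<in> sets M" for i unfolding T_def by measurable
  have bb: "bdd (b i)" for i unfolding b_def using AM TM by auto
  have bsm: "(\<lambda>x. b i x * \<sigma> i x) \<in> borel_measurable (F (i - 1))" for i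
    using bm sigma_meas by measurable
  have bsb: "bdd (\<lambda>x. b i x * \<sigma> i x)" for i by (rule bdd_mult[OF bb sigma_bdd])
  define En where "En n = {x \<in> space M. x \<in> A' \<and> (\<exists>b\<le>n. nxt \<nu> x = enat b \<and> ereal KK * mu \<nu> x < ereal \<bar>S b x - S k0 x\<bar>)}" for n
  have EnM: "En n \<in> sets M" for n unfolding En_def by measurable
  have D2: "AE x in M. \<forall>k0 k. \<nu> x = enat k0 \<longrightarrow> k0 \<le> k \<longrightarrow> enat k \<le> nxt \<nu> x \<longrightarrow> ereal \<bar>fk k x\<bar> \<le> mu \<nu> x"
    by (rule D2_fact[OF st])
  have bnd: "KK\<^sup>2 * c\<^sup>2 * measure M (En n) \<le> 4 * c\<^sup>2 * measure M A'" for n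
  proof -
    define Y where "Y x = (\<Sum>i\<in>{k0<..n}. b i x * dd i x)" for x
    define Z where "Z x = (\<Sum>i\<in>{k0<..n}. (b i x * \<sigma> i x) * dd i x)" for x
    have pY: "(\<integral>x. (Y x)\<^sup>2 \<partial>M) = (\<Sum>i\<in>{k0<..n}. \<integral>x. (b i x)\<^sup>2 * (dd i x)\<^sup>2 \<partial>M)"
      unfolding Y_def by (rule pyth[OF bm bb])
    have pZ: "(\<integral>x. (Z x)\<^sup>2 \<partial>M) = (\<Sum>i\<in>{k0<..n}. \<integral>x. (b i x * \<sigma> i x)\<^sup>2 * (dd i x)\<^sup>2 \<partial>M)"
      unfolding Z_def by (rule pyth[OF bsm bsb])
    have ZY: "(\<integral>x. (Z x)\<^sup>2 \<partial>M) \<le> (\<integral>x. (Y x)\<^sup>2 \<partial>M)"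
      unfolding pZ pY
    proof (rule sum_mono, rule integral_mono_AE)
      fix i
      show "integrable M (\<lambda>x. (b i x * \<sigma> i x)\<^sup>2 * (dd i x)\<^sup>2)"
        by (rule bdd_int, intro bdd_mult bdd_pow2 bsb dd_bdd)
      show "integrable M (\<lambda>x. (b i x)\<^sup>2 * (dd i x)\<^sup>2)"
        by (rule bdd_int, intro bdd_mult bdd_pow2 bb dd_bdd)
      show "AE x in M. (b i x * \<sigma> i x)\<^sup>2 * (dd i x)\<^sup>2 \<le> (b i x)\<^sup>2 * (dd i x)\<^sup>2"
        using sigma_AE
      proof eventually_elim
        case (elim x)
        have "(\<sigma> i x)\<^sup>2 \<le> 1" using elim abs_square_le_1 by blast
        then have "(b i x)\<^sup>2 * (\<sigma> i x)\<^sup>2 \<le> (b i x)\<^sup>2 * 1" by (intro mult_left_mono) auto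
        then show ?case by (intro mult_right_mono) (auto simp: power_mult_distrib)
      qed
    qed
    have Yb: "bdd Y" unfolding Y_def by (intro bdd_sum bdd_mult bb dd_bdd) auto
    have Zb: "bdd Z" unfolding Z_def by (intro bdd_sum bdd_mult bb dd_bdd sigma_bdd) auto
    have Ysum: "Y x = indicator A' x * (\<Sum>i\<in>{k0<..trunc n (nxt \<nu> x)}. dd i x)" if x: "x \<in> space M" for x
    proof -
      have "Y x = (\<Sum>i\<in>{k0<..n}. indicator A' x * (if enat i \<le> nxt \<nu> x then dd i x else 0))"
        unfolding Y_def b_def T_def using x by (intro sum.cong) (auto split: split_indicator)
      also have "\<dots> = indicator A' x * (\<Sum>i\<in>{k0<..trunc n (nxt \<nu> x)}. dd i x)"
        by (simp add: sum_distrib_left[symmetric] sum_trunc)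
      finally show ?thesis .
    qed
    have Zsum: "Z x = indicator A' x * (\<Sum>i\<in>{k0<..trunc n (nxt \<nu> x)}. \<sigma> i x * dd i x)" if x: "x \<in> space M" for x
    proof -
      have "Z x = (\<Sum>i\<in>{k0<..n}. indicator A' x * (if enat i \<le> nxt \<nu> x then \<sigma> i x * dd i x else 0))"
        unfolding Z_def b_def T_def using x by (intro sum.cong) (auto split: split_indicator)
      also have "\<dots> = indicator A' x * (\<Sum>i\<in>{k0<..trunc n (nxt \<nu> x)}. \<sigma> i x * dd i x)"
        by (simp add: sum_distrib_left[symmetric] sum_trunc)
      finally show ?thesis .
    qed
    have Yle: "(\<integral>x. (Y x)\<^sup>2 \<partial>M) \<le> (\<integral>x. indicator A' x * (4 * c\<^sup>2) \<partial>M)"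
    proof (rule integral_mono_AE)
      show "integrable M (\<lambda>x. (Y x)\<^sup>2)" by (rule bdd_int, rule bdd_pow2[OF Yb])
      show "integrable M (\<lambda>x. indicator A' x * (4 * c\<^sup>2))" using AM by simp
      show "AE x in M. (Y x)\<^sup>2 \<le> indicator A' x * (4 * c\<^sup>2)"
        using D2 AE_space
      proof eventually_elim
        case (elim x)
        show ?case
        proof (cases "x \<in> A'")
          case False then show ?thesis using Ysum[OF elim(2)] by simp
        next
          case True
          then have nu: "\<nu> x = enat k0" using Asub by auto
          define e where "e = trunc n (nxt \<nu> x)"
          show ?thesis
          proof (cases "k0 \<le> e")
            case False
            then have "{k0<..e} = {}" by auto
            then show ?thesis using Ysum[OF elim(2)] True c unfolding e_def by simp
          next
            case True
            have "ereal \<bar>fk e x\<bar> \<le> mu \<nu> x" using elim(1) nu True trunc_le unfolding e_def by blast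
            then have f1: "\<bar>fk e x\<bar> \<le> c" using muc \<open>x \<in> A'\<close> by simp
            have "ereal \<bar>fk k0 x\<bar> \<le> mu \<nu> x" using elim(1) nu nxt_ge[of \<nu> x] by auto
            then have f2: "\<bar>fk k0 x\<bar> \<le> c" using muc \<open>x \<in> A'\<close> by simp
            have "Y x = fk e x - fk k0 x" using Ysum[OF elim(2)] tel[OF True] \<open>x \<in> A'\<close> unfolding e_def by simp
            then have "\<bar>Y x\<bar> \<le> 2 * c" using f1 f2 by simp
            then have "(Y x)\<^sup>2 \<le> (2 * c)\<^sup>2" by (metis abs_le_square_iff abs_of_nonneg c less_imp_le mult_nonneg_nonneg zero_le_numeral abs_ge_zero order_trans)
            then show ?thesis using \<open>x \<in> A'\<close> by (simp add: power_mult_distrib)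
          qed
        qed
      qed
    qed
    have Zge: "(\<integral>x. indicator (En n) x * (KK\<^sup>2 * c\<^sup>2) \<partial>M) \<le> (\<integral>x. (Z x)\<^sup>2 \<partial>M)"
    proof (rule integral_mono)
      show "integrable M (\<lambda>x. (Z x)\<^sup>2)" by (rule bdd_int, rule bdd_pow2[OF Zb])
      show "integrable M (\<lambda>x. indicator (En n) x * (KK\<^sup>2 * c\<^sup>2))" using EnM by simp
      fix x assume x: "x \<in> space M"
      show "indicator (En n) x * (KK\<^sup>2 * c\<^sup>2) \<le> (Z x)\<^sup>2"
      proof (cases "x \<in> En n")
        case False then show ?thesis by simp
      next
        case True
        then obtain bb where xb: "x \<in> A'" "bb \<le> n" "nxt \<nu> x = enat bb" "ereal KK * mu \<nu> x < ereal \<bar>S bb x - S k0 x\<bar>"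
          unfolding En_def by blast
        have nu: "\<nu> x = enat k0" using Asub xb by auto
        have "k0 < bb" using nxt_gt[OF nu xb(3)] .
        have tb: "trunc n (nxt \<nu> x) = bb" using xb trunc_enat by simp
        have "Z x = S bb x - S k0 x" using Zsum[OF x] xb S_tel[of k0 bb x] \<open>k0 < bb\<close> tb by simp
        moreover have "KK * c < \<bar>S bb x - S k0 x\<bar>" using xb(4) muc[OF xb(1)] by simp
        ultimately have "KK * c < \<bar>Z x\<bar>" by simp
        moreover have "0 \<le> KK * c" using cfacts(5) c by simp
        ultimately have "(KK * c)\<^sup>2 \<le> (Z x)\<^sup>2"
          by (metis abs_le_square_iff abs_of_nonneg less_imp_le)
        then show ?thesis using True by (simp add: power_mult_distrib)
      qed
    qed
    have "KK\<^sup>2 * c\<^sup>2 * measure M (En n) = (\<integral>x. indicator (En n) x * (KK\<^sup>2 * c\<^sup>2) \<partial>M)"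
      using EnM by simp
    also have "\<dots> \<le> (\<integral>x. indicator A' x * (4 * c\<^sup>2) \<partial>M)" using Zge ZY Yle by linarith
    also have "\<dots> = 4 * c\<^sup>2 * measure M A'" using AM by simp
    finally show ?thesis .
  qed
  have bnd2: "measure M (En n) \<le> 4 / KK\<^sup>2 * measure M A'" for n
  proof -
    have p: "0 < KK\<^sup>2 * c\<^sup>2" using cfacts(5) c by simp
    have "measure M (En n) = (KK\<^sup>2 * c\<^sup>2 * measure M (En n)) / (KK\<^sup>2 * c\<^sup>2)" using p by (metis less_irrefl nonzero_mult_div_cancel_left)
    also have "\<dots> \<le> (4 * c\<^sup>2 * measure M A') / (KK\<^sup>2 * c\<^sup>2)" using bnd[of n] p by (intro divide_right_mono) auto
    also have "\<dots> = 4 / KK\<^sup>2 * measure M A'" using c by (simp add: field_simps)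
    finally show ?thesis .
  qed
  have UE: "A' \<inter> E2 \<nu> k0 = (\<Union>n. En n)"
    unfolding E2_def En_def using AM sets.sets_into_space by blast
  have inc: "incseq En" unfolding incseq_def En_def by (auto intro: order_trans)
  have lim: "(\<lambda>n. measure M (En n)) \<longlonglongrightarrow> measure M (\<Union>n. En n)"
    by (rule finite_Lim_measure_incseq) (use EnM inc in auto)
  show ?thesis unfolding UE using LIMSEQ_le_const2[OF lim] bnd2 by auto
qed

end



context mart_setting
begin

lemma E2_zero:
  assumes st: "stopping_time_F M F \<nu>" and AF: "A' \<in> sets (F k0)"
    and Asub: "A' \<subseteq> {x \<in> space M. \<nu> x = enat k0}"
    and muc: "\<And>x. x \<in> A' \<Longrightarrow> mu \<nu> x = 0"
  shows "measure M (A' \<inter> E2 \<nu> k0) = 0"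
proof -
  have AM: "A' \<in> sets M" using sets_F_M[OF AF] .
  have NM: "A' \<inter> E2 \<nu> k0 \<in> sets M" using AM E2_sets[OF st] by simp
  have "AE x in M. x \<notin> A' \<inter> E2 \<nu> k0"
    using D2_fact[OF st]
  proof eventually_elim
    case (elim x)
    show ?case
    proof
      assume x: "x \<in> A' \<inter> E2 \<nu> k0"
      then obtain bb where bb: "nxt \<nu> x = enat bb" "ereal KK * mu \<nu> x < ereal \<bar>S bb x - S k0 x\<bar>"
        unfolding E2_def by blast
      have nu: "\<nu> x = enat k0" using x Asub by auto
      have m0: "mu \<nu> x = 0" using x muc by auto
      have kb: "k0 < bb" using nxt_gt[OF nu bb(1)] .
      have f0: "fk i x = 0" if "k0 \<le> i" "i \<le> bb" for i
      proof -
        have "ereal \<bar>fk i x\<bar> \<le> mu \<nu> x" using elim nu that bb(1) by auto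
        then show ?thesis using m0 by simp
      qed
      have "(\<Sum>i\<in>{k0<..bb}. \<sigma> i x * dd i x) = 0"
      proof (rule sum.neutral, rule ballI)
        fix i assume i: "i \<in> {k0<..bb}"
        then have "dd i x = fk i x - fk (i - 1) x" using dd_pos by simp
        also have "\<dots> = 0" using f0[of i] f0[of "i - 1"] i by auto
        finally show "\<sigma> i x * dd i x = 0" by simp
      qed
      then have "S bb x - S k0 x = 0" using S_tel[of k0 bb x] kb by simp
      then show False using bb(2) m0 by simp
    qed
  qed
  then have "emeasure M (A' \<inter> E2 \<nu> k0) = 0"
    using AE_iff_measurable[OF NM, of "\<lambda>x. x \<notin> A' \<inter> E2 \<nu> k0"] NM sets.sets_into_space by blast
  then show ?thesis by (simp add: measure_def)
qed

lemma E2_inf: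
  assumes "\<And>x. x \<in> A' \<Longrightarrow> mu \<nu> x = \<infinity>"
  shows "A' \<inter> E2 \<nu> k0 = {}"
  using assms cfacts(5) unfolding E2_def by auto

lemma comb:
  fixes I :: "'i set"
  assumes I: "countable I" and X: "\<And>i. i \<in> I \<Longrightarrow> X i \<in> sets M" and dj: "disjoint_family_on X I"
    and A: "A \<in> sets M" and cov: "A \<subseteq> (\<Union>i\<in>I. X i)" and E: "E \<in> sets M"
    and le: "\<And>i. i \<in> I \<Longrightarrow> measure M (A \<inter> X i \<inter> E) \<le> measure M (A \<inter> X i) / 2"
  shows "measure M (A \<inter> E) \<le> measure M A / 2"
proof -
  have dj1: "disjoint_family_on (\<lambda>i. A \<inter> X i) I" using dj unfolding disjoint_family_on_def by auto
  have dj2: "disjoint_family_on (\<lambda>i. A \<inter> X i \<inter> E) I" using dj unfolding disjoint_family_on_def by auto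
  have eA: "A = (\<Union>i\<in>I. A \<inter> X i)" using cov by auto
  have eAE: "A \<inter> E = (\<Union>i\<in>I. A \<inter> X i \<inter> E)" using cov by auto
  have m1: "emeasure M A = (\<integral>\<^sup>+i. emeasure M (A \<inter> X i) \<partial>count_space I)"
    by (subst eA, rule emeasure_UN_countable) (use I X A dj1 in auto)
  have m2: "emeasure M (A \<inter> E) = (\<integral>\<^sup>+i. emeasure M (A \<inter> X i \<inter> E) \<partial>count_space I)"
    by (subst eAE, rule emeasure_UN_countable) (use I X A E dj2 in auto)
  have pt: "emeasure M (A \<inter> X i \<inter> E) \<le> emeasure M (A \<inter> X i) * ennreal (1/2)" if i: "i \<in> I" for i
  proof -
    have "emeasure M (A \<inter> X i \<inter> E) = ennreal (measure M (A \<inter> X i \<inter> E))" by (simp add: emeasure_eq_measure)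
    also have "\<dots> \<le> ennreal (measure M (A \<inter> X i) * (1/2))" using le[OF i] by (intro ennreal_leI) simp
    also have "\<dots> = ennreal (measure M (A \<inter> X i)) * ennreal (1/2)" by (rule ennreal_mult) auto
    also have "\<dots> = emeasure M (A \<inter> X i) * ennreal (1/2)" by (simp add: emeasure_eq_measure)
    finally show ?thesis .
  qed
  have "emeasure M (A \<inter> E) \<le> (\<integral>\<^sup>+i. emeasure M (A \<inter> X i) * ennreal (1/2) \<partial>count_space I)"
    unfolding m2 by (rule nn_integral_mono) (use pt in simp)
  also have "\<dots> = emeasure M A * ennreal (1/2)" unfolding m1 by (rule nn_integral_multc) (rule borel_measurable_count_space)
  also have "\<dots> = ennreal (measure M A * (1/2))" unfolding emeasure_eq_measure by (rule ennreal_mult[symmetric]) auto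
  finally have "ennreal (measure M (A \<inter> E)) \<le> ennreal (measure M A * (1/2))" by (simp add: emeasure_eq_measure)
  then show ?thesis by (subst (asm) ennreal_le_iff) auto
qed

definition pcond :: "int option option \<Rightarrow> int set \<Rightarrow> bool" where
  "pcond opt Q = (case opt of None \<Rightarrow> (\<forall>m. m \<notin> Q)
     | Some None \<Rightarrow> (\<forall>m. m \<in> Q)
     | Some (Some m) \<Rightarrow> m \<in> Q \<and> m - 1 \<notin> Q)"

lemma opt3_cases:
  obtains "opt = None" | "opt = Some None" | m where "opt = Some (Some m)"
  by (metis option.exhaust)

lemma pcond_simps[simp]:
  "pcond None Q \<longleftrightarrow> (\<forall>m. m \<notin> Q)"
  "pcond (Some None) Q \<longleftrightarrow> (\<forall>m. m \<in> Q)"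
  "pcond (Some (Some m)) Q \<longleftrightarrow> m \<in> Q \<and> m - 1 \<notin> Q"
  unfolding pcond_def by auto

lemma pcond_uniq:
  assumes "pcond o1 Q" "pcond o2 Q" and up: "\<And>m m'. m \<in> Q \<Longrightarrow> m \<le> m' \<Longrightarrow> m' \<in> Q"
  shows "o1 = o2"
proof -
  have uniq: "m = m'" if "m \<in> Q" "m - 1 \<notin> Q" "m' \<in> Q" "m' - 1 \<notin> Q" for m m'
  proof (rule ccontr)
    assume "m \<noteq> m'"
    then have "m \<le> m' - 1 \<or> m' \<le> m - 1" by auto
    then show False using that up by blast
  qed
  show ?thesis
  proof (cases o1 rule: opt3_cases)
    case 1 then show ?thesis using assms by (cases o2 rule: opt3_cases) auto
  next
    case 2 then show ?thesis using assms by (cases o2 rule: opt3_cases) auto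
  next
    case (3 m) then show ?thesis using assms uniq by (cases o2 rule: opt3_cases) auto
  qed
qed

definition pc :: "('a \<Rightarrow> enat) \<Rightarrow> nat \<times> int option option \<Rightarrow> 'a set" where
  "pc \<nu> i = {x \<in> space M. \<nu> x = enat (fst i) \<and> pcond (snd i) (Qs \<nu> (fst i) x)}"

lemma pc_sets:
  assumes st: "stopping_time_F M F \<nu>"
  shows "pc \<nu> (k0, opt) \<in> sets (F k0)"
proof -
  have e: "pc \<nu> (k0, opt) = {x \<in> space M. \<nu> x = enat k0} \<inter> {x \<in> space M. pcond opt (Qs \<nu> k0 x)}"
    unfolding pc_def by auto
  have "{x \<in> space M. pcond opt (Qs \<nu> k0 x)} \<in> sets (F k0)"
    by (rule pred_F) (cases opt rule: opt3_cases; simp only: pcond_simps; measurable)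
  then show ?thesis unfolding e using st_eq[OF st] by simp
qed

lemma pc_disj: "disjoint_family_on (pc \<nu>) UNIV"
  unfolding disjoint_family_on_def
proof (intro ballI impI)
  fix i j :: "nat \<times> int option option" assume "i \<noteq> j"
  show "pc \<nu> i \<inter> pc \<nu> j = {}"
  proof (rule ccontr)
    assume "pc \<nu> i \<inter> pc \<nu> j \<noteq> {}"
    then obtain x where x: "x \<in> pc \<nu> i" "x \<in> pc \<nu> j" by blast
    obtain k0 opt where i: "i = (k0, opt)" by (cases i)
    obtain k1 opq where j: "j = (k1, opq)" by (cases j)
    have "k0 = k1" using x i j unfolding pc_def by auto
    then have op: "opt \<noteq> opq" using \<open>i \<noteq> j\<close> i j by simp
    have xo: "pcond opt (Qs \<nu> k0 x)" using x(1) i unfolding pc_def by auto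
    have xp: "pcond opq (Qs \<nu> k0 x)" using x(2) j \<open>k0 = k1\<close> unfolding pc_def by auto
    have "opt = opq" by (rule pcond_uniq[OF xo xp Qs_up])
    then show False using op by simp
  qed
qed

lemma pc_cover: "{x \<in> space M. \<nu> x < \<infinity>} \<subseteq> (\<Union>i. pc \<nu> i)"
proof
  fix x assume x: "x \<in> {x \<in> space M. \<nu> x < \<infinity>}"
  then obtain k0 where nu: "\<nu> x = enat k0" by (cases "\<nu> x") auto
  from Qs_trichotomy[of \<nu> k0 x] show "x \<in> (\<Union>i. pc \<nu> i)"
  proof (elim disjE exE)
    assume "Qs \<nu> k0 x = {}"
    then have "x \<in> pc \<nu> (k0, None)" using x nu unfolding pc_def by auto
    then show ?thesis by blast
  next
    assume "Qs \<nu> k0 x = UNIV"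
    then have "x \<in> pc \<nu> (k0, Some None)" using x nu unfolding pc_def by auto
    then show ?thesis by blast
  next
    fix m assume "m \<in> Qs \<nu> k0 x \<and> m - 1 \<notin> Qs \<nu> k0 x"
    then have "x \<in> pc \<nu> (k0, Some (Some m))" using x nu unfolding pc_def by auto
    then show ?thesis by blast
  qed
qed

end



context mart_setting
begin

lemma nxt_sparse:
  assumes st: "stopping_time_F M F \<nu>" and A: "A \<in> stopped_sets M F \<nu>"
    and Ainf: "A \<subseteq> {x \<in> space M. \<nu> x < \<infinity>}"
  shows "measure M (A \<inter> {x \<in> space M. nxt \<nu> x < \<infinity>}) \<le> measure M A / 2"
proof -
  have AM: "A \<in> sets M" using A unfolding stopped_sets_def by blast
  have [measurable]: "nxt \<nu> \<in> measurable M (count_space UNIV)" by (rule st_meas[OF nxt_stopping[OF st]])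
  have EM: "{x \<in> space M. nxt \<nu> x < \<infinity>} \<in> sets M" by measurable
  show ?thesis
  proof (rule comb[where I=UNIV and X="pc \<nu>", OF _ _ pc_disj AM _ EM])
    show "countable (UNIV :: (nat \<times> int option option) set)" by simp
    show "pc \<nu> i \<in> sets M" for i using pc_sets[OF st, of "fst i" "snd i"] sets_F_M by simp
    show "A \<subseteq> (\<Union>i\<in>UNIV. pc \<nu> i)" using Ainf pc_cover by blast
  next
    fix i :: "nat \<times> int option option"
    obtain k0 opt where i: "i = (k0, opt)" by (cases i)
    define A' where "A' = A \<inter> pc \<nu> i"
    have pcsub: "pc \<nu> i \<subseteq> {x \<in> space M. \<nu> x = enat k0}" unfolding pc_def i by auto
    have A'eq: "A' = (A \<inter> {x \<in> space M. \<nu> x = enat k0}) \<inter> pc \<nu> (k0, opt)" unfolding A'_def using pcsub i by auto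
    have A'F: "A' \<in> sets (F k0)" unfolding A'eq using stopped_piece[OF st A] pc_sets[OF st] by simp
    have A'M: "A' \<in> sets M" using sets_F_M[OF A'F] .
    have Asub: "A' \<subseteq> {x \<in> space M. \<nu> x = enat k0}" unfolding A'_def using pcsub by auto
    define E1 where "E1 = {x \<in> space M. \<exists>k>k0. th < condE M F k (indicator (Bs \<nu>)) x}"
    have E1M: "E1 \<in> sets M" unfolding E1_def by measurable
    have E2M: "E2 \<nu> k0 \<in> sets M" by (rule E2_sets[OF st])
    have sub: "A' \<inter> {x \<in> space M. nxt \<nu> x < \<infinity>} \<subseteq> (A' \<inter> E1) \<union> (A' \<inter> E2 \<nu> k0)"
    proof
      fix x assume x: "x \<in> A' \<inter> {x \<in> space M. nxt \<nu> x < \<infinity>}"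
      then obtain bb where bb: "nxt \<nu> x = enat bb" by (cases "nxt \<nu> x") auto
      have nu: "\<nu> x = enat k0" using x Asub by auto
      have "stc \<nu> k0 bb x" by (rule nxt_stc[OF nu bb])
      moreover have "k0 < bb" by (rule nxt_gt[OF nu bb])
      ultimately show "x \<in> (A' \<inter> E1) \<union> (A' \<inter> E2 \<nu> k0)"
        using x bb unfolding stc_def E1_def E2_def by blast
    qed
    have m1: "measure M (A' \<inter> {x \<in> space M. nxt \<nu> x < \<infinity>}) \<le> measure M (A' \<inter> E1) + measure M (A' \<inter> E2 \<nu> k0)"
    proof -
      have "measure M (A' \<inter> {x \<in> space M. nxt \<nu> x < \<infinity>}) \<le> measure M ((A' \<inter> E1) \<union> (A' \<inter> E2 \<nu> k0))"
        by (rule finite_measure_mono[OF sub]) (use A'M E1M E2M in auto)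
      also have "\<dots> \<le> measure M (A' \<inter> E1) + measure M (A' \<inter> E2 \<nu> k0)"
        by (rule measure_Un_le) (use A'M E1M E2M in auto)
      finally show ?thesis .
    qed
    have b1: "measure M (A' \<inter> E1) \<le> rr / th * measure M A'"
    proof -
      have "th * measure M (A' \<inter> E1) \<le> rr * measure M A'" unfolding E1_def by (rule E1_bound[OF st A'F Asub])
      then show ?thesis using cfacts(4) by (simp add: field_simps)
    qed
    have b2: "measure M (A' \<inter> E2 \<nu> k0) \<le> 4 / KK\<^sup>2 * measure M A'"
    proof (cases opt rule: opt3_cases)
      case 1
      have "mu \<nu> x = \<infinity>" if "x \<in> A'" for x
      proof -
        have "\<nu> x = enat k0" "Qs \<nu> k0 x = {}" using that unfolding A'_def pc_def i 1 by auto
        then show ?thesis using mua_empty mu_enat by metis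
      qed
      then have "A' \<inter> E2 \<nu> k0 = {}" by (rule E2_inf)
      then show ?thesis by simp
    next
      case 2
      have "mu \<nu> x = 0" if "x \<in> A'" for x
      proof -
        have "\<nu> x = enat k0" "Qs \<nu> k0 x = UNIV" using that unfolding A'_def pc_def i 2 by auto
        then show ?thesis using mua_all mu_enat by metis
      qed
      then have "measure M (A' \<inter> E2 \<nu> k0) = 0" by (rule E2_zero[OF st A'F Asub])
      then show ?thesis by simp
    next
      case (3 m)
      have "mu \<nu> x = ereal (2 powr real_of_int m)" if "x \<in> A'" for x
      proof -
        have "\<nu> x = enat k0" "m \<in> Qs \<nu> k0 x" "m - 1 \<notin> Qs \<nu> k0 x" using that unfolding A'_def pc_def i 3 by auto
        then show ?thesis using mua_least mu_enat by metis
      qed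
      then show ?thesis by (intro E2_bound_pos[OF st A'F Asub, of "2 powr real_of_int m"]) auto
    qed
    have "measure M (A' \<inter> {x \<in> space M. nxt \<nu> x < \<infinity>}) \<le> (rr / th + 4 / KK\<^sup>2) * measure M A'"
      using m1 b1 b2 by (simp add: distrib_right)
    also have "\<dots> \<le> 1 / 2 * measure M A'" by (rule mult_right_mono[OF cfacts(7)]) simp
    finally show "measure M (A \<inter> pc \<nu> i \<inter> {x \<in> space M. nxt \<nu> x < \<infinity>}) \<le> measure M (A \<inter> pc \<nu> i) / 2"
      unfolding A'_def by simp
  qed
qed

end



context mart_setting
begin

definition nus :: "nat \<Rightarrow> 'a \<Rightarrow> enat" where "nus j = (nxt ^^ j) (\<lambda>_. enat 0)"

lemma nus_0: "nus 0 = (\<lambda>_. enat 0)" unfolding nus_def by simp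
lemma nus_Suc: "nus (Suc j) = nxt (nus j)" unfolding nus_def by simp

lemma nus_st: "stopping_time_F M F (nus j)"
proof (induction j)
  case 0
  show ?case unfolding nus_0 stopping_time_F_def using sets.top[of "F _"] by (auto simp: zero_enat_def[symmetric])
next
  case (Suc j) then show ?case unfolding nus_Suc by (rule nxt_stopping)
qed

lemma nus_mono: "i \<le> j \<Longrightarrow> nus i x \<le> nus j x"
proof (induction j)
  case 0 then show ?case by simp
next
  case (Suc j)
  show ?case
  proof (cases "i = Suc j")
    case False
    then have "nus i x \<le> nus j x" using Suc by simp
    also have "\<dots> \<le> nus (Suc j) x" unfolding nus_Suc by (rule nxt_ge)
    finally show ?thesis .
  qed simp
qed

lemma nus_Suc_fin: "nus (Suc j) x = enat b \<Longrightarrow> \<exists>a. nus j x = enat a \<and> a < b"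
  unfolding nus_Suc nxt_def by (cases "nus j x") (auto split: if_splits intro: LeastI2_ex)

lemma nus_ge: "nus j x = enat a \<Longrightarrow> j \<le> a"
proof (induction j arbitrary: a)
  case 0 then show ?case by simp
next
  case (Suc j)
  then obtain a' where "nus j x = enat a'" "a' < a" using nus_Suc_fin by blast
  with Suc.IH show ?case by fastforce
qed

lemma nus_sparse: "sparse_stopping M F nus"
  unfolding sparse_stopping_def
proof (intro conjI allI ballI impI)
  show "stopping_time_F M F (nus j)" for j by (rule nus_st)
  show "nus j x \<le> nus (Suc j) x" for j x unfolding nus_Suc by (rule nxt_ge)
  fix j A assume "A \<in> stopped_sets M F (nus j)" "A \<subseteq> {x \<in> space M. nus j x < \<infinity>}"
  then show "measure M (A \<inter> {x \<in> space M. nus (Suc j) x < \<infinity>}) \<le> measure M A / 2"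
    unfolding nus_Suc by (rule nxt_sparse[OF nus_st])
qed

definition PP :: "'a \<Rightarrow> nat \<Rightarrow> ennreal" where
  "PP x j = e2ennreal (Pr_stop M F rr (nus j) (maxop_stop M F (nus j) f) x) * indicator {y \<in> space M. nus j y < \<infinity>} x"

lemma mua_nonneg: "0 \<le> mua \<nu> k x"
  unfolding mua_def by (rule INF_greatest) simp

lemma dom_point:
  assumes xs: "x \<in> space M"
    and H1: "\<forall>j k0. nus j x = enat k0 \<longrightarrow> mua (nus j) k0 x \<le> ereal 2 * Pr M F rr k0 (gg (nus j)) x"
    and H2: "\<forall>j k0 k. nus j x = enat k0 \<longrightarrow> k0 \<le> k \<longrightarrow> enat k \<le> nus (Suc j) x \<longrightarrow> ereal \<bar>fk k x\<bar> \<le> mu (nus j) x"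
    and H3: "\<forall>k. \<bar>\<sigma> k x\<bar> \<le> 1"
  shows "ennreal \<bar>S l x\<bar> \<le> ennreal (2 * (KK + 3)) * (\<Sum>j. PP x j)"
proof (cases "\<exists>j a. nus j x = enat a \<and> mu (nus j) x = \<infinity>")
  case True
  then obtain j a where ja: "nus j x = enat a" "mu (nus j) x = \<infinity>" by blast
  have "mua (nus j) a x = \<infinity>" using ja mu_enat by metis
  then have "\<infinity> \<le> ereal 2 * Pr M F rr a (gg (nus j)) x" using H1 ja by metis
  then have "Pr M F rr a (gg (nus j)) x = \<infinity>" by (cases "Pr M F rr a (gg (nus j)) x") auto
  then have "PP x j = top" unfolding PP_def Pr_stop_def using ja xs by (simp add: gg_def)
  moreover have "PP x j \<le> (\<Sum>j. PP x j)" using sum_le_suminf[of "PP x" "{j}"] by simp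
  ultimately have "(\<Sum>j. PP x j) = top" by (simp add: top_unique)
  moreover have "ennreal (2 * (KK + 3)) \<noteq> 0" using cfacts(5) by simp
  ultimately show ?thesis by (simp add: ennreal_mult_top)
next
  case False
  define m where "m j = real_of_ereal (mu (nus j) x)" for j
  have mfin: "mu (nus j) x = ereal (m j)" and m0: "0 \<le> m j" if "nus j x = enat a" for j a
  proof -
    have mm: "mu (nus j) x = mua (nus j) a x" using that mu_enat by metis
    have "mu (nus j) x \<noteq> \<infinity>" using False that by blast
    moreover have "0 \<le> mu (nus j) x" using mm mua_nonneg by simp
    ultimately show "mu (nus j) x = ereal (m j)" unfolding m_def by (cases "mu (nus j) x") auto
    then show "0 \<le> m j" using \<open>0 \<le> mu (nus j) x\<close> by simp
  qed
  have mP: "ennreal (m j) \<le> 2 * PP x j" if "nus j x = enat a" for j a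
  proof -
    have "mua (nus j) a x = ereal (m j)" using mfin[OF that] mu_enat that by metis
    then have "ereal (m j) \<le> ereal 2 * Pr M F rr a (gg (nus j)) x" using H1 that by metis
    then have "ereal (m j / 2) \<le> Pr M F rr a (gg (nus j)) x"
      by (cases "Pr M F rr a (gg (nus j)) x") auto
    then have "ennreal (m j / 2) \<le> e2ennreal (Pr M F rr a (gg (nus j)) x)"
      using e2ennreal_mono by fastforce
    then have "ennreal (m j / 2) \<le> PP x j" unfolding PP_def Pr_stop_def using that xs by (simp add: gg_def)
    then have "2 * ennreal (m j / 2) \<le> 2 * PP x j" by (rule mult_left_mono) simp
    moreover have "2 * ennreal (m j / 2) = ennreal (m j)"
    proof -
      have "2 * ennreal (m j / 2) = ennreal 2 * ennreal (m j / 2)" by simp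
      also have "\<dots> = ennreal (2 * (m j / 2))" using m0[OF that] by (subst ennreal_mult) auto
      finally show ?thesis by simp
    qed
    ultimately show ?thesis by simp
  qed
  have fkb: "\<bar>fk k x\<bar> \<le> m j" if "nus j x = enat a" "a \<le> k" "enat k \<le> nus (Suc j) x" for j a k
    using H2 that mfin[OF that(1)] by fastforce
  have Sdiff: "\<bar>S k x - S a x\<bar> \<le> KK * m j" if "nus j x = enat a" "a \<le> k" "enat k < nus (Suc j) x" for j a k
  proof (cases "k = a")
    case True then show ?thesis using m0[OF that(1)] cfacts(5) by simp
  next
    case False
    then have "a < k" using that by simp
    then have "\<not> stc (nus j) a k x" using nxt_nstc[of "nus j" x a, OF that(1)] that(3) unfolding nus_Suc by blast
    then show ?thesis unfolding stc_def using mfin[OF that(1)] by simp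
  qed
  have claim: "\<bar>S a x\<bar> \<le> (KK + 3) * (\<Sum>i<j. m i) + m j" if "nus j x = enat a" for j a
    using that
  proof (induction j arbitrary: a)
    case 0
    then have a0: "a = 0" by (simp add: nus_0)
    have "\<bar>fk 0 x\<bar> \<le> m 0" using fkb[of 0 0 0] 0 a0 by (simp add: zero_enat_def[symmetric])
    moreover have "\<bar>S 0 x\<bar> \<le> \<bar>fk 0 x\<bar>" unfolding S_def using H3 by (simp add: dd_0 abs_mult mult_left_le_one_le)
    ultimately show ?case using a0 by simp
  next
    case (Suc j)
    obtain a' where a': "nus j x = enat a'" "a' < a" using nus_Suc_fin[OF Suc.prems] by blast
    have IH: "\<bar>S a' x\<bar> \<le> (KK + 3) * (\<Sum>i<j. m i) + m j" using Suc.IH[OF a'(1)] .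
    have le_a: "enat a \<le> nus (Suc j) x" using Suc.prems by simp
    have d1: "\<bar>S (a - 1) x - S a' x\<bar> \<le> KK * m j"
      by (rule Sdiff[OF a'(1)]) (use a' Suc.prems in auto)
    have f1: "\<bar>fk a x\<bar> \<le> m j" by (rule fkb[OF a'(1)]) (use a' le_a in auto)
    have le_a1: "enat (a - 1) \<le> nus (Suc j) x"
    proof -
      have "enat (a - 1) \<le> enat a" by simp
      then show ?thesis using le_a by (rule order_trans)
    qed
    have f2: "\<bar>fk (a - 1) x\<bar> \<le> m j" by (rule fkb[OF a'(1)]) (use a' le_a1 in auto)
    have aS: "a = Suc (a - 1)" using a' by simp
    have Sa: "S a x = S (a - 1) x + \<sigma> a x * dd a x"
    proof -
      have "S (Suc (a - 1)) x = S (a - 1) x + \<sigma> (Suc (a - 1)) x * dd (Suc (a - 1)) x" by (simp add: S_def)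
      then show ?thesis using aS by metis
    qed
    have dda: "dd a x = fk a x - fk (a - 1) x" using dd_pos a' by simp
    have "\<bar>\<sigma> a x * dd a x\<bar> \<le> \<bar>dd a x\<bar>" using H3 by (simp add: abs_mult mult_left_le_one_le)
    also have "\<dots> \<le> 2 * m j" using f1 f2 dda by simp
    finally have sd: "\<bar>\<sigma> a x * dd a x\<bar> \<le> 2 * m j" .
    have "\<bar>S a x\<bar> \<le> \<bar>S a' x\<bar> + \<bar>S (a - 1) x - S a' x\<bar> + \<bar>\<sigma> a x * dd a x\<bar>" unfolding Sa by linarith
    also have "\<dots> \<le> (KK + 3) * (\<Sum>i<j. m i) + m j + KK * m j + 2 * m j" using IH d1 sd by linarith
    also have "\<dots> = (KK + 3) * (\<Sum>i<Suc j. m i)" by (simp add: algebra_simps)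
    also have "\<dots> \<le> (KK + 3) * (\<Sum>i<Suc j. m i) + m (Suc j)" using m0[OF Suc.prems] by simp
    finally show ?case .
  qed
  have ex: "\<exists>j. enat l < nus j x"
  proof (cases "nus (Suc l) x")
    case (enat a) then show ?thesis using nus_ge[OF enat] by (intro exI[of _ "Suc l"]) simp
  next
    case infinity then show ?thesis by (intro exI[of _ "Suc l"]) simp
  qed
  define J where "J = (LEAST j. enat l < nus j x)"
  have J: "enat l < nus J x" unfolding J_def by (rule LeastI_ex[OF ex])
  have J0: "J \<noteq> 0" proof assume "J = 0" then show False using J by (simp add: nus_0) qed
  define j where "j = J - 1"
  have Jj: "J = Suc j" using J0 unfolding j_def by simp
  have "\<not> enat l < nus j x" unfolding j_def J_def by (rule not_less_Least) (use J0 J_def j_def in simp)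
  then have "nus j x \<le> enat l" by simp
  then obtain a where a: "nus j x = enat a" "a \<le> l" by (cases "nus j x") auto
  have lt: "enat l < nus (Suc j) x" using J Jj by simp
  have "\<bar>S l x\<bar> \<le> \<bar>S a x\<bar> + \<bar>S l x - S a x\<bar>" by linarith
  also have "\<dots> \<le> (KK + 3) * (\<Sum>i<j. m i) + m j + KK * m j"
    using claim[OF a(1)] Sdiff[OF a(1) a(2) lt] by linarith
  also have "\<dots> \<le> (KK + 3) * (\<Sum>i<Suc j. m i)" using m0[OF a(1)] by (simp add: algebra_simps)
  finally have Sl: "\<bar>S l x\<bar> \<le> (KK + 3) * (\<Sum>i<Suc j. m i)" .
  have fin_i: "\<exists>b. nus i x = enat b" if "i < Suc j" for i
  proof -
    have "nus i x \<le> nus j x" using that by (intro nus_mono) simp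
    then show ?thesis using a by (cases "nus i x") auto
  qed
  have mi0: "0 \<le> m i" if "i < Suc j" for i using fin_i[OF that] m0 by blast
  have "ennreal \<bar>S l x\<bar> \<le> ennreal ((KK + 3) * (\<Sum>i<Suc j. m i))" using Sl by (rule ennreal_leI)
  also have "\<dots> = ennreal (KK + 3) * (\<Sum>i<Suc j. ennreal (m i))"
  proof -
    have s0: "0 \<le> (\<Sum>i<Suc j. m i)" using mi0 by (intro sum_nonneg) auto
    have "ennreal ((KK + 3) * (\<Sum>i<Suc j. m i)) = ennreal (KK + 3) * ennreal (\<Sum>i<Suc j. m i)"
      using cfacts(5) s0 by (intro ennreal_mult) auto
    also have "ennreal (\<Sum>i<Suc j. m i) = (\<Sum>i<Suc j. ennreal (m i))"
      using mi0 by (intro sum_ennreal[symmetric]) auto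
    finally show ?thesis .
  qed
  also have "\<dots> \<le> ennreal (KK + 3) * (\<Sum>i<Suc j. 2 * PP x i)"
    by (intro mult_left_mono sum_mono) (use fin_i mP in auto)
  also have "\<dots> = ennreal (2 * (KK + 3)) * (\<Sum>i<Suc j. PP x i)"
  proof -
    have e1: "(\<Sum>i<Suc j. 2 * PP x i) = 2 * (\<Sum>i<Suc j. PP x i)" by (rule sum_distrib_left[symmetric])
    have e2: "ennreal (2 * (KK + 3)) = ennreal 2 * ennreal (KK + 3)" by (subst ennreal_mult) (use cfacts(5) in auto)
    show ?thesis unfolding e1 e2 ennreal_numeral by (simp only: ac_simps)
  qed
  also have "\<dots> \<le> ennreal (2 * (KK + 3)) * (\<Sum>i. PP x i)"
    by (intro mult_left_mono sum_le_suminf) auto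
  finally show ?thesis .
qed

end



context mart_setting
begin

lemma dom_AE: "AE x in M. Tstar M F \<sigma> f x \<le> ennreal (2 * (KK + 3)) * (\<Sum>j. PP x j)"
proof -
  have H1: "AE x in M. \<forall>j k0. nus j x = enat k0 \<longrightarrow> mua (nus j) k0 x \<le> ereal 2 * Pr M F rr k0 (gg (nus j)) x"
    unfolding AE_all_countable using D1_fact[OF nus_st] by blast
  have H2: "AE x in M. \<forall>j k0 k. nus j x = enat k0 \<longrightarrow> k0 \<le> k \<longrightarrow> enat k \<le> nus (Suc j) x \<longrightarrow> ereal \<bar>fk k x\<bar> \<le> mu (nus j) x"
    unfolding nus_Suc by (rule AE_all_countable[THEN iffD2]) (use D2_fact[OF nus_st] in blast)
  show ?thesis using H1 H2 sigma_AE AE_space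
  proof eventually_elim
    case (elim x)
    have "Tstar M F \<sigma> f x = (SUP l. ennreal \<bar>S l x\<bar>)"
      unfolding Tstar_def S_def dd_def by simp
    also have "\<dots> \<le> ennreal (2 * (KK + 3)) * (\<Sum>j. PP x j)"
      by (rule SUP_least, rule dom_point) (use elim in auto)
    finally show ?case .
  qed
qed

end

theorem corollary2p2:
  fixes M :: "'a measure" and F :: "nat \<Rightarrow> 'a measure" and R r :: real
    and \<sigma> :: "nat \<Rightarrow> 'a \<Rightarrow> real"
  assumes "prob_space M"
    and "is_filtration M F"
    and "regular_filtration M F R"
    and "r = 1 / (2 * (R + 3))"
    and "predictable_bounded M F \<sigma>"
  shows "\<exists>C>0. \<forall>f. f \<in> borel_measurable M \<longrightarrow> (\<exists>B. \<forall>x\<in>space M. \<bar>f x\<bar> \<le> B) \<longrightarrow>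
     (\<exists>\<nu>. sparse_stopping M F \<nu> \<and>
        (AE x in M. Tstar M F \<sigma> f x \<le> ennreal C *
           (\<Sum>j. e2ennreal (Pr_stop M F r (\<nu> j) (maxop_stop M F (\<nu> j) f) x)
                 * indicator {y \<in> space M. \<nu> j y < \<infinity>} x)))"
proof -
  have loc: "mart_setting M F R \<sigma> f B" if "f \<in> borel_measurable M" "\<forall>x\<in>space M. \<bar>f x\<bar> \<le> B" for f :: "'a \<Rightarrow> real" and B :: real
    by (intro mart_setting.intro filt_setting.intro mart_setting_axioms.intro assms(1,2,3,5) that)
  interpret z: mart_setting M F R \<sigma> "\<lambda>_. 0" 0
    by (rule loc) auto
  have R1: "1 \<le> R" by (rule z.R_ge1)
  define C where "C = 2 * (2 * (R + 3) + 3)"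
  have Cpos: "0 < C" unfolding C_def using R1 by simp
  show ?thesis
  proof (intro exI[of _ C] conjI allI impI Cpos)
    fix f :: "'a \<Rightarrow> real" assume fm: "f \<in> borel_measurable M" and "\<exists>B. \<forall>x\<in>space M. \<bar>f x\<bar> \<le> B"
    then obtain B where fb: "\<forall>x\<in>space M. \<bar>f x\<bar> \<le> B" by blast
    interpret ms: mart_setting M F R \<sigma> f B
      by (rule loc[OF fm fb])
    have rr: "ms.rr = r" unfolding ms.rr_def using assms(4) by simp
    have CK: "2 * (ms.KK + 3) = C" unfolding ms.KK_def C_def by simp
    show "\<exists>\<nu>. sparse_stopping M F \<nu> \<and>
        (AE x in M. Tstar M F \<sigma> f x \<le> ennreal C *
           (\<Sum>j. e2ennreal (Pr_stop M F r (\<nu> j) (maxop_stop M F (\<nu> j) f) x)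
                 * indicator {y \<in> space M. \<nu> j y < \<infinity>} x))"
      using ms.nus_sparse ms.dom_AE unfolding ms.PP_def rr CK by blast
  qed
qed


end
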